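(* Let $(A,d,\Delta,\mu)$ be a connected DG-bialgebra over $\mathbb{Z}_2$ and $\Omega A$ its reduced cobar construction. Define $\smile_1:\Omega A\otimes\Omega A\to\Omega A$ on generators by $$[a_1,\dots,a_m]\smile_1[b_1,\dots,b_n]=\sum_{k=1}^m[a_1,\dots,a_{k-1},a_k^{(1)}\cdot b_1,\dots,a_k^{(n)}\cdot b_n,a_{k+1},\dots,a_m],$$ where $\Delta^n(a_k)=a_k^{(1)}\otimes\cdots\otimes a_k^{(n)}$ (summation understood). Then for all $x,y\in\Omega A$, $$d_\Omega(x\smile_1 y)=d_\Omega x\smile_1 y+x\smile_1 d_\Omega y+x\cdot y+y\cdot x,$$ where $\cdot$ is the (concatenation) product of $\Omega A$; in particular $d_\Omega([a_1,\dots,a_m]\smile_1[b_1,\dots,b_n])=d_\Omega[a_1,\dots,a_m]\smile_1[b_1,\dots,b_n]+[a_1,\dots,a_m]\smile_1 d_\Omega[b_1,\dots,b_n]+[a_1,\dots,a_m,b_1,\dots,b_n]+[b_1,\dots,b_n,a_1,\dots,a_m]$.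
   Context: Work over $\mathbb{Z}_2$ (signs ignored). A DG-bialgebra $(A,d,\Delta,\mu)$ is a DG-coalgebra $(A,d,\Delta)$ with counit, together with an associative unital multiplication $\mu:A\otimes A\to A$, $a\cdot b=\mu(a\otimes b)$, which is a morphism of DG-coalgebras. It is connected if its degree-0 part is $\mathbb{Z}_2$; $\bar A$ denotes the positive-degree part. $\Delta^n:A\to A^{\otimes n}$ is the iterated diagonal: $\Delta^1=\mathrm{id}$, $\Delta^2=\Delta$, $\Delta^n=(\Delta^{n-1}\otimes\mathrm{id})\Delta$. Write $\Delta=\mathrm{id}\otimes1+1\otimes\mathrm{id}+\Delta'$. The reduced cobar construction $\Omega A$ is the tensor algebra $T(s\bar A)$ on the shifted positive part, with elements written $[a_1,\dots,a_n]$ and product given by concatenation; its differential is the derivation $d_\Omega=d_1+d_2$ determined on generators by $d_1[a]=[da]$ and $d_2[a]=\sum[a',a'']$ where $\Delta'(a)=\sum a'\otimes a''$. *)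

theory Defs
  imports Main
begin

text \<open>
A graded Z_2-vector space is given by a homogeneous basis,
namely the type 'b together with a degree function deg. A vector is a finite set of
basis elements (its support; coefficients in Z_2), addition is symmetric difference.
The basis of a tensor power is given by tuples/lists of basis elements, so a tensor
of vectors is the product set of their supports. A linear map is determined by its
values on basis elements and extended linearly by zsum.
\<close>

definition vadd :: "'a set \<Rightarrow> 'a set \<Rightarrow> 'a set" where
  "vadd X Y = (X - Y) \<union> (Y - X)"

definition zsum :: "('a \<Rightarrow> 'c set) \<Rightarrow> 'a set \<Rightarrow> 'c set" where
  "zsum f X = {c. odd (card {x \<in> X. c \<in> f x})}"

text \<open>Value of the counit (a functional given on the basis) on a vector.\<close>
definition eps_vec :: "('b \<Rightarrow> bool) \<Rightarrow> 'b set \<Rightarrow> bool" where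
  "eps_vec eps V = odd (card {c \<in> V. eps c})"

text \<open>
Connected DG-bialgebra over Z_2 with homogeneous basis 'b: degree deg, differential dA
(homogeneous of degree +1 or -1), diagonal cop, counit eps, multiplication mu, and unit e
(the unique basis element of degree 0, spanning A_0 = Z_2).
\<close>
definition conn_dg_bialgebra ::
  "('b \<Rightarrow> nat) \<Rightarrow> 'b \<Rightarrow> ('b \<Rightarrow> bool) \<Rightarrow> ('b \<Rightarrow> 'b set) \<Rightarrow> ('b \<Rightarrow> ('b \<times> 'b) set)
     \<Rightarrow> ('b \<Rightarrow> 'b \<Rightarrow> 'b set) \<Rightarrow> bool" where
  "conn_dg_bialgebra deg e eps dA cop mu \<longleftrightarrow>
     \<comment> \<open>finiteness of the values of the structure maps on basis elements\<close>
     (\<forall>b. finite (dA b) \<and> finite (cop b)) \<and> (\<forall>a b. finite (mu a b)) \<and>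
     \<comment> \<open>homogeneity (all structure maps are graded maps of the appropriate degree)\<close>
     (\<exists>\<delta>::int. (\<delta> = 1 \<or> \<delta> = -1) \<and> (\<forall>b c. c \<in> dA b \<longrightarrow> int (deg c) = int (deg b) + \<delta>)) \<and>
     (\<forall>b x y. (x, y) \<in> cop b \<longrightarrow> deg x + deg y = deg b) \<and>
     (\<forall>a b c. c \<in> mu a b \<longrightarrow> deg c = deg a + deg b) \<and>
     (\<forall>b. eps b \<longrightarrow> deg b = 0) \<and>
     \<comment> \<open>connected: A_0 = Z_2, spanned by the unit e\<close>
     (\<forall>b. deg b = 0 \<longleftrightarrow> b = e) \<and>
     \<comment> \<open>differential\<close>
     (\<forall>b. zsum dA (dA b) = {}) \<and>
     \<comment> \<open>DG-coalgebra: coassociativity, counit, Delta and eps are chain maps\<close>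
     (\<forall>b. zsum (\<lambda>(x, y). (\<lambda>(x1, x2). (x1, x2, y)) ` cop x) (cop b)
         = zsum (\<lambda>(x, y). (\<lambda>(y1, y2). (x, y1, y2)) ` cop y) (cop b)) \<and>
     (\<forall>b. zsum (\<lambda>(x, y). if eps x then {y} else {}) (cop b) = {b}) \<and>
     (\<forall>b. zsum (\<lambda>(x, y). if eps y then {x} else {}) (cop b) = {b}) \<and>
     (\<forall>b. zsum cop (dA b)
         = zsum (\<lambda>(x, y). vadd ((\<lambda>x'. (x', y)) ` dA x) ((\<lambda>y'. (x, y')) ` dA y)) (cop b)) \<and>
     (\<forall>b. \<not> eps_vec eps (dA b)) \<and>
     \<comment> \<open>associative unital multiplication\<close>
     (\<forall>x y z. zsum (\<lambda>c. mu c z) (mu x y) = zsum (mu x) (mu y z)) \<and>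
     (\<forall>b. mu e b = {b} \<and> mu b e = {b}) \<and>
     \<comment> \<open>mu is a morphism of DG-coalgebras A \<otimes> A \<rightarrow> A\<close>
     (\<forall>a b. zsum dA (mu a b) = vadd (zsum (\<lambda>c. mu c b) (dA a)) (zsum (mu a) (dA b))) \<and>
     (\<forall>a b. zsum cop (mu a b)
         = zsum (\<lambda>((a1, a2), (b1, b2)). mu a1 b1 \<times> mu a2 b2) (cop a \<times> cop b)) \<and>
     (\<forall>a b. eps_vec eps (mu a b) \<longleftrightarrow> eps a \<and> eps b)"

text \<open>Reduced diagonal Delta' = Delta + id \<otimes> 1 + 1 \<otimes> id.\<close>
definition red_cop :: "('b \<Rightarrow> ('b \<times> 'b) set) \<Rightarrow> 'b \<Rightarrow> 'b \<Rightarrow> ('b \<times> 'b) set" where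
  "red_cop cop e a = vadd (cop a) {(a, e), (e, a)}"

text \<open>Iterated diagonal Delta^n : A \<rightarrow> A^{\<otimes> n}; Delta^0 is the counit (convention).\<close>
fun itdiag :: "('b \<Rightarrow> bool) \<Rightarrow> ('b \<Rightarrow> ('b \<times> 'b) set) \<Rightarrow> nat \<Rightarrow> 'b \<Rightarrow> 'b list set" where
  "itdiag eps cop 0 a = (if eps a then {[]} else {})"
| "itdiag eps cop (Suc 0) a = {[a]}"
| "itdiag eps cop (Suc (Suc n)) a =
     zsum (\<lambda>(x, y). (\<lambda>l. l @ [y]) ` itdiag eps cop (Suc n) x) (cop a)"

definition subst_slot :: "'b list \<Rightarrow> nat \<Rightarrow> 'b list set \<Rightarrow> 'b list set" where
  "subst_slot w k V = (\<lambda>z. take k w @ z @ drop (Suc k) w) ` V"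

text \<open>Elements of the reduced cobar construction Omega A = T(s bar A): finite Z_2-combinations
  of words [a_1,...,a_n] of basis elements of bar A (i.e. basis elements other than e).\<close>
definition cobar_elem :: "'b \<Rightarrow> 'b list set \<Rightarrow> bool" where
  "cobar_elem e X \<longleftrightarrow> finite X \<and> (\<forall>w \<in> X. e \<notin> set w)"

definition omult :: "'b list set \<Rightarrow> 'b list set \<Rightarrow> 'b list set" where
  "omult X Y = zsum (\<lambda>(u, v). {u @ v}) (X \<times> Y)"

text \<open>Cobar differential d_Omega = d_1 + d_2 (derivation extending its values on generators).\<close>
definition dOmega_word :: "'b \<Rightarrow> ('b \<Rightarrow> 'b set) \<Rightarrow> ('b \<Rightarrow> ('b \<times> 'b) set) \<Rightarrow> 'b list \<Rightarrow> 'b list set" where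
  "dOmega_word e dA cop w =
     zsum (\<lambda>k. vadd (subst_slot w k ((\<lambda>c. [c]) ` dA (w ! k)))
                     (subst_slot w k ((\<lambda>(x, y). [x, y]) ` red_cop cop e (w ! k))))
          {..<length w}"

definition dOmega :: "'b \<Rightarrow> ('b \<Rightarrow> 'b set) \<Rightarrow> ('b \<Rightarrow> ('b \<times> 'b) set) \<Rightarrow> 'b list set \<Rightarrow> 'b list set" where
  "dOmega e dA cop X = zsum (dOmega_word e dA cop) X"

definition cup1_word :: "('b \<Rightarrow> bool) \<Rightarrow> ('b \<Rightarrow> ('b \<times> 'b) set) \<Rightarrow> ('b \<Rightarrow> 'b \<Rightarrow> 'b set)
     \<Rightarrow> 'b list \<Rightarrow> 'b list \<Rightarrow> 'b list set" where
  "cup1_word eps cop mu u v =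
     zsum (\<lambda>k. zsum (\<lambda>cs. subst_slot u k (listset (map2 mu cs v)))
                     (itdiag eps cop (length v) (u ! k)))
          {..<length u}"

definition cup1 :: "('b \<Rightarrow> bool) \<Rightarrow> ('b \<Rightarrow> ('b \<times> 'b) set) \<Rightarrow> ('b \<Rightarrow> 'b \<Rightarrow> 'b set)
     \<Rightarrow> 'b list set \<Rightarrow> 'b list set \<Rightarrow> 'b list set" where
  "cup1 eps cop mu X Y = zsum (\<lambda>(u, v). cup1_word eps cop mu u v) (X \<times> Y)"

end

theory Submission
  imports Defs "HOL-Library.Z2"
begin

declare add_bit_eq_xor[simp del] mult_bit_eq_and[simp del] bit_not_zero_iff[simp del] bit_not_one_iff[simp del]

definition v :: "'a set \<Rightarrow> 'a \<Rightarrow> bit" where "v S c = of_bool (c \<in> S)"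

lemma bit_add_self0: "(x::bit) + x = 0"
  by (cases x) (simp_all only: add_0 one_add_one bit_2_eq_0)

lemma of_nat_bit: "(of_nat n :: bit) = of_bool (odd n)"
proof (induction n)
  case 0 then show ?case by simp
next
  case (Suc n) then show ?case by (cases "odd n") (auto simp: bit_add_self0)
qed

lemma v_zsum: "finite X \<Longrightarrow> v (zsum f X) c = (\<Sum>x\<in>X. v (f x) c)"
proof -
  assume X: "finite X"
  have "(\<Sum>x\<in>X. v (f x) c) = (\<Sum>x\<in>X. of_bool (c \<in> f x))" by (simp add: v_def)
  also have "\<dots> = of_nat (card (X \<inter> {x. c \<in> f x}))" using X by (simp add: sum_of_bool_eq)
  also have "X \<inter> {x. c \<in> f x} = {x\<in>X. c \<in> f x}" by auto
  finally show ?thesis by (simp add: v_def zsum_def of_nat_bit)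
qed

lemma of_bool_bit_inj: "(of_bool P :: bit) = of_bool Q \<longleftrightarrow> (P = Q)"
  by (cases P; cases Q) simp_all

lemma set_eq_v: "A = B \<longleftrightarrow> (\<forall>c. v A c = v B c)"
  by (simp add: v_def of_bool_bit_inj set_eq_iff)

lemma set_eqI_v: "(\<And>c. v A c = v B c) \<Longrightarrow> A = B"
  by (subst set_eq_v) (rule allI)

lemma v_vadd: "v (vadd A B) c = v A c + v B c"
  apply (cases "c \<in> A"; cases "c \<in> B")
  apply (simp_all only: v_def vadd_def Un_iff Diff_iff of_bool_eq bit_add_self0 simp_thms add_0 add_0_right)
  done

lemma v_empty[simp]: "v {} c = 0" by (simp add: v_def)

lemma bit_add_self[simp]: "(x::bit) + x = 0"
  by (rule bit_add_self0)

lemma bit_add_self2[simp]: "(x::bit) + (x + y) = y"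
  by (simp only: add.assoc[symmetric] bit_add_self0 add_0)

lemma vadd_assoc: "vadd (vadd A B) C = vadd A (vadd B C)"
  by (rule set_eqI_v) (simp add: v_vadd add.assoc)

lemma vadd_comm: "vadd A B = vadd B A"
  by (rule set_eqI_v) (simp add: v_vadd add.commute)

lemma vadd_left_comm: "vadd A (vadd B C) = vadd B (vadd A C)"
  by (rule set_eqI_v) (simp add: v_vadd add.left_commute)

lemma vadd_self[simp]: "vadd A A = {}"
  by (simp add: vadd_def)

lemma vadd_self2[simp]: "vadd A (vadd A B) = B"
  by (metis vadd_assoc vadd_self Un_empty_left Diff_empty Diff_empty vadd_def Un_empty_right empty_Diff)

lemma vadd_empty[simp]: "vadd A {} = A" "vadd {} A = A"
  by (auto simp: vadd_def)

lemma finite_vadd[simp]: "finite A \<Longrightarrow> finite B \<Longrightarrow> finite (vadd A B)"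
  by (simp add: vadd_def)

lemma sum_v_restrict: "finite U \<Longrightarrow> Z \<subseteq> U \<Longrightarrow> (\<Sum>y\<in>U. v Z y * g y) = (\<Sum>y\<in>Z. g y)"
proof -
  assume U: "finite U" and Z: "Z \<subseteq> U"
  have "(\<Sum>y\<in>U. v Z y * g y) = (\<Sum>y\<in>U. if y \<in> Z then g y else 0)"
    by (rule sum.cong) (simp_all add: v_def)
  also have "\<dots> = (\<Sum>y\<in>U \<inter> Z. g y)" using U by (simp add: sum.inter_restrict)
  also have "U \<inter> Z = Z" using Z by auto
  finally show ?thesis .
qed

lemma zsum_empty[simp]: "zsum f {} = {}"
  by (simp add: zsum_def)

lemma zsum_single[simp]: "zsum f {x} = f x"
proof -
  have "{x' \<in> {x}. c \<in> f x'} = (if c \<in> f x then {x} else {})" for c by auto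
  then show ?thesis by (auto simp: zsum_def)
qed

lemma zsum_zero[simp]: "zsum (\<lambda>x. {}) X = {}"
  by (simp add: zsum_def)

lemma zsum_cong: "(\<And>x. x \<in> X \<Longrightarrow> f x = g x) \<Longrightarrow> zsum f X = zsum g X"
proof -
  assume h: "\<And>x. x \<in> X \<Longrightarrow> f x = g x"
  have "{x \<in> X. c \<in> f x} = {x \<in> X. c \<in> g x}" for c using h by auto
  then show ?thesis by (simp add: zsum_def)
qed

lemma zsum_subset: "zsum f X \<subseteq> \<Union> (f ` X)"
proof
  fix c assume "c \<in> zsum f X"
  then have "odd (card {x \<in> X. c \<in> f x})" by (simp add: zsum_def)
  then have "card {x \<in> X. c \<in> f x} \<noteq> 0" by (intro notI) simp
  then have "{x \<in> X. c \<in> f x} \<noteq> {}" by (intro notI) simp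
  then show "c \<in> \<Union> (f ` X)" by blast
qed

lemma finite_zsum[simp]: "finite X \<Longrightarrow> (\<And>x. x \<in> X \<Longrightarrow> finite (f x)) \<Longrightarrow> finite (zsum f X)"
proof -
  assume "finite X" "\<And>x. x \<in> X \<Longrightarrow> finite (f x)"
  then have "finite (\<Union> (f ` X))" by simp
  then show ?thesis using zsum_subset by (rule finite_subset[rotated])
qed

lemma zsum_vadd_fun: "finite X \<Longrightarrow> zsum (\<lambda>x. vadd (f x) (g x)) X = vadd (zsum f X) (zsum g X)"
  by (rule set_eqI_v) (simp add: v_zsum v_vadd sum.distrib)

lemma zsum_vadd_set: "finite X \<Longrightarrow> finite Y \<Longrightarrow> zsum f (vadd X Y) = vadd (zsum f X) (zsum f Y)"
proof (rule set_eqI_v)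
  fix c assume X: "finite X" and Y: "finite Y"
  let ?U = "X \<union> Y"
  have U: "finite ?U" using X Y by simp
  have "vadd X Y \<subseteq> ?U" by (auto simp: vadd_def)
  have s: "\<And>Z. Z \<subseteq> ?U \<Longrightarrow> (\<Sum>x\<in>Z. v (f x) c) = (\<Sum>x\<in>?U. v Z x * v (f x) c)"
  proof -
    fix Z assume "Z \<subseteq> ?U"
    then have "(\<Sum>x\<in>?U. v Z x * v (f x) c) = (\<Sum>x\<in>Z. v (f x) c)"
      using U by (simp add: sum_v_restrict)
    then show "?thesis Z" by simp
  qed
  have "v (zsum f (vadd X Y)) c = (\<Sum>x\<in>vadd X Y. v (f x) c)" using X Y by (simp add: v_zsum)
  also have "\<dots> = (\<Sum>x\<in>?U. v (vadd X Y) x * v (f x) c)" by (rule s) (auto simp: vadd_def)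
  also have "\<dots> = (\<Sum>x\<in>?U. v X x * v (f x) c) + (\<Sum>x\<in>?U. v Y x * v (f x) c)"
    by (simp add: v_vadd distrib_right sum.distrib)
  also have "\<dots> = (\<Sum>x\<in>X. v (f x) c) + (\<Sum>x\<in>Y. v (f x) c)" by (simp add: s)
  also have "\<dots> = v (vadd (zsum f X) (zsum f Y)) c" using X Y by (simp add: v_vadd v_zsum)
  finally show "v (zsum f (vadd X Y)) c = v (vadd (zsum f X) (zsum f Y)) c" .
qed

lemma zsum_zsum:
  assumes X: "finite X" and F: "\<And>x. x \<in> X \<Longrightarrow> finite (f x)"
  shows "zsum g (zsum f X) = zsum (\<lambda>x. zsum g (f x)) X"
proof (rule set_eqI_v)
  fix c
  let ?U = "\<Union> (f ` X)"
  have U: "finite ?U" using X F by simp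
  have s: "\<And>Z. Z \<subseteq> ?U \<Longrightarrow> (\<Sum>y\<in>Z. v (g y) c) = (\<Sum>y\<in>?U. v Z y * v (g y) c)"
  proof -
    fix Z assume "Z \<subseteq> ?U"
    then have "(\<Sum>y\<in>?U. v Z y * v (g y) c) = (\<Sum>y\<in>Z. v (g y) c)"
      using U by (simp add: sum_v_restrict)
    then show "?thesis Z" by simp
  qed
  have Zf: "finite (zsum f X)" using X F by simp
  have "v (zsum g (zsum f X)) c = (\<Sum>y\<in>zsum f X. v (g y) c)" using Zf by (simp add: v_zsum)
  also have "\<dots> = (\<Sum>y\<in>?U. v (zsum f X) y * v (g y) c)" by (rule s) (rule zsum_subset)
  also have "\<dots> = (\<Sum>y\<in>?U. \<Sum>x\<in>X. v (f x) y * v (g y) c)"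
    using X by (simp add: v_zsum sum_distrib_right)
  also have "\<dots> = (\<Sum>x\<in>X. \<Sum>y\<in>?U. v (f x) y * v (g y) c)" by (rule sum.swap)
  also have "\<dots> = (\<Sum>x\<in>X. \<Sum>y\<in>f x. v (g y) c)"
    by (rule sum.cong, simp, subst s, auto)
  also have "\<dots> = v (zsum (\<lambda>x. zsum g (f x)) X) c" using X F by (simp add: v_zsum)
  finally show "v (zsum g (zsum f X)) c = v (zsum (\<lambda>x. zsum g (f x)) X) c" .
qed

lemma zsum_image: "inj_on h X \<Longrightarrow> zsum f (h ` X) = zsum (\<lambda>x. f (h x)) X"
proof -
  assume inj: "inj_on h X"
  have "{y \<in> h ` X. c \<in> f y} = h ` {x \<in> X. c \<in> f (h x)}" for c by auto
  moreover have "card (h ` {x \<in> X. c \<in> f (h x)}) = card {x \<in> X. c \<in> f (h x)}" for c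
    by (rule card_image) (rule inj_on_subset[OF inj], auto)
  ultimately show ?thesis by (simp add: zsum_def)
qed

lemma zsum_singletons[simp]: "zsum (\<lambda>x. {x}) X = X"
proof -
  have "{x \<in> X. c \<in> {x}} = (if c \<in> X then {c} else {})" for c by auto
  then show ?thesis by (simp add: zsum_def set_eq_iff)
qed

lemma zsum_singletons_image: "inj_on h X \<Longrightarrow> zsum (\<lambda>x. {h x}) X = h ` X"
  using zsum_image[of h X "\<lambda>y. {y}"] by simp

lemma image_zsum: "inj h \<Longrightarrow> h ` zsum f X = zsum (\<lambda>x. h ` f x) X"
proof -
  assume inj: "inj h"
  have a: "{x \<in> X. h d \<in> h ` f x} = {x \<in> X. d \<in> f x}" for d using inj by (auto dest: injD)
  have b: "c \<notin> range h \<Longrightarrow> {x \<in> X. c \<in> h ` f x} = {}" for c by auto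
  show ?thesis
  proof (rule set_eqI)
    fix c show "c \<in> h ` zsum f X \<longleftrightarrow> c \<in> zsum (\<lambda>x. h ` f x) X"
    proof (cases "c \<in> range h")
      case True
      then obtain d where "c = h d" by auto
      then show ?thesis using a inj by (auto simp: zsum_def dest: injD)
    next
      case False
      have "c \<notin> h ` zsum f X" using False by blast
      moreover have "c \<notin> zsum (\<lambda>x. h ` f x) X" by (simp add: zsum_def b[OF False])
      ultimately show ?thesis by blast
    qed
  qed
qed

lemma zsum_prod: "finite A \<Longrightarrow> finite B \<Longrightarrow> zsum f (A \<times> B) = zsum (\<lambda>a. zsum (\<lambda>b. f (a, b)) B) A"
  by (rule set_eqI_v) (simp add: v_zsum sum.cartesian_product)

lemma zsum_swap: "finite A \<Longrightarrow> finite B \<Longrightarrow>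
   zsum (\<lambda>a. zsum (\<lambda>b. f a b) B) A = zsum (\<lambda>b. zsum (\<lambda>a. f a b) A) B"
  by (rule set_eqI_v) (simp add: v_zsum, rule sum.swap)

lemma image_vadd: "inj h \<Longrightarrow> h ` vadd A B = vadd (h ` A) (h ` B)"
  by (auto simp: vadd_def dest: injD)

lemma vadd_image_inj: "inj h \<Longrightarrow> vadd (h ` A) (h ` B) = h ` vadd A B"
  by (simp add: image_vadd)

lemma zsum_vadd2: "finite X \<Longrightarrow> finite Y \<Longrightarrow> X \<inter> Y = {} \<Longrightarrow> zsum f (X \<union> Y) = vadd (zsum f X) (zsum f Y)"
proof -
  assume "finite X" "finite Y" "X \<inter> Y = {}"
  then have "X \<union> Y = vadd X Y" by (auto simp: vadd_def)
  then show ?thesis using \<open>finite X\<close> \<open>finite Y\<close> by (simp add: zsum_vadd_set)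
qed

definition W :: "'b set \<Rightarrow> 'b list set" where "W S = (\<lambda>c. [c]) ` S"

lemma inj_append_left: "inj (\<lambda>w. u @ w)" by (simp add: inj_on_def)
lemma inj_append_right: "inj (\<lambda>w. w @ u)" by (simp add: inj_on_def)

lemma omult_single_left: "omult {u} Y = (\<lambda>w. u @ w) ` Y"
proof -
  have "{u} \<times> Y = (\<lambda>w. (u, w)) ` Y" by auto
  then have "omult {u} Y = zsum (\<lambda>w. {u @ w}) Y"
    by (simp add: omult_def zsum_image inj_on_def)
  also have "\<dots> = (\<lambda>w. u @ w) ` Y" by (rule zsum_singletons_image) (simp add: inj_on_def)
  finally show ?thesis .
qed

lemma omult_single_right: "omult X {w} = (\<lambda>u. u @ w) ` X"
proof -
  have "X \<times> {w} = (\<lambda>u. (u, w)) ` X" by auto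
  then have "omult X {w} = zsum (\<lambda>u. {u @ w}) X"
    by (simp add: omult_def zsum_image inj_on_def)
  also have "\<dots> = (\<lambda>u. u @ w) ` X" by (rule zsum_singletons_image) (simp add: inj_on_def)
  finally show ?thesis .
qed

lemma omult_singles[simp]: "omult {u} {w} = {u @ w}"
  by (simp add: omult_single_left)

lemma omult_empty[simp]: "omult {} Y = {}" "omult X {} = {}"
  by (simp_all add: omult_def)

lemma omult_alt: "finite X \<Longrightarrow> finite Y \<Longrightarrow> omult X Y = zsum (\<lambda>u. zsum (\<lambda>w. {u @ w}) Y) X"
  by (simp add: omult_def zsum_prod)

lemma finite_omult[simp]: "finite X \<Longrightarrow> finite Y \<Longrightarrow> finite (omult X Y)"
  by (simp add: omult_alt)

lemma omult_zsum_left: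
  assumes S: "finite S" and f: "\<And>s. s \<in> S \<Longrightarrow> finite (f s)" and Y: "finite Y"
  shows "omult (zsum f S) Y = zsum (\<lambda>s. omult (f s) Y) S"
proof -
  have "omult (zsum f S) Y = zsum (\<lambda>u. zsum (\<lambda>w. {u @ w}) Y) (zsum f S)"
    using assms by (simp add: omult_alt)
  also have "\<dots> = zsum (\<lambda>s. zsum (\<lambda>u. zsum (\<lambda>w. {u @ w}) Y) (f s)) S"
    using S f by (rule zsum_zsum)
  also have "\<dots> = zsum (\<lambda>s. omult (f s) Y) S"
    using f Y by (intro zsum_cong) (simp add: omult_alt)
  finally show ?thesis .
qed

lemma omult_zsum_right:
  assumes S: "finite S" and f: "\<And>s. s \<in> S \<Longrightarrow> finite (f s)" and X: "finite X"
  shows "omult X (zsum f S) = zsum (\<lambda>s. omult X (f s)) S"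
proof -
  have "omult X (zsum f S) = zsum (\<lambda>u. zsum (\<lambda>w. {u @ w}) (zsum f S)) X"
    using assms by (simp add: omult_alt)
  also have "\<dots> = zsum (\<lambda>u. zsum (\<lambda>s. zsum (\<lambda>w. {u @ w}) (f s)) S) X"
    using S f by (intro zsum_cong zsum_zsum)
  also have "\<dots> = zsum (\<lambda>s. zsum (\<lambda>u. zsum (\<lambda>w. {u @ w}) (f s)) X) S"
    using X S by (rule zsum_swap)
  also have "\<dots> = zsum (\<lambda>s. omult X (f s)) S"
    using f X by (intro zsum_cong) (simp add: omult_alt)
  finally show ?thesis .
qed

lemma omult_vadd_left:
  "finite A \<Longrightarrow> finite B \<Longrightarrow> finite Y \<Longrightarrow> omult (vadd A B) Y = vadd (omult A Y) (omult B Y)"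
  by (simp add: omult_alt zsum_vadd_set)

lemma omult_vadd_right:
  assumes "finite A" "finite B" "finite X"
  shows "omult X (vadd A B) = vadd (omult X A) (omult X B)"
proof -
  have "omult X (vadd A B) = zsum (\<lambda>u. vadd (zsum (\<lambda>w. {u @ w}) A) (zsum (\<lambda>w. {u @ w}) B)) X"
    using assms by (simp add: omult_alt zsum_vadd_set)
  also have "\<dots> = vadd (omult X A) (omult X B)"
    using assms by (simp add: omult_alt zsum_vadd_fun)
  finally show ?thesis .
qed

lemma omult_expand: "finite X \<Longrightarrow> finite Y \<Longrightarrow> omult X Y = zsum (\<lambda>u. zsum (\<lambda>w. omult {u} {w}) Y) X"
  by (simp add: omult_alt)

lemma omult_assoc:
  assumes X: "finite X" and Y: "finite Y" and Z: "finite Z"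
  shows "omult (omult X Y) Z = omult X (omult Y Z)"
proof -
  have "omult (omult X Y) Z = omult (zsum (\<lambda>u. zsum (\<lambda>w. {u @ w}) Y) X) Z"
    using X Y by (simp add: omult_alt[of X Y])
  also have "\<dots> = zsum (\<lambda>u. omult (zsum (\<lambda>w. {u @ w}) Y) Z) X"
    using X Y Z by (simp add: omult_zsum_left)
  also have "\<dots> = zsum (\<lambda>u. zsum (\<lambda>w. omult {u @ w} Z) Y) X"
    using X Y Z by (simp add: omult_zsum_left)
  also have "\<dots> = zsum (\<lambda>u. zsum (\<lambda>w. omult {u} (omult {w} Z)) Y) X"
    by (simp add: omult_single_left image_image)
  also have "\<dots> = zsum (\<lambda>u. omult {u} (zsum (\<lambda>w. omult {w} Z) Y)) X"
    using X Y Z by (simp add: omult_zsum_right)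
  also have "\<dots> = zsum (\<lambda>u. omult {u} (omult Y Z)) X"
    using omult_zsum_left[of Y "\<lambda>w. {w}" Z] Y Z by simp
  also have "\<dots> = omult X (omult Y Z)"
    using omult_zsum_left[of X "\<lambda>w. {w}" "omult Y Z"] X Y Z by simp
  finally show ?thesis .
qed


definition pos_sum :: "('b \<Rightarrow> 'b list set) \<Rightarrow> 'b list \<Rightarrow> 'b list set" where
  "pos_sum g w = zsum (\<lambda>k. subst_slot w k (g (w ! k))) {..<length w}"

lemma inj_slot: "inj (\<lambda>z. take k w @ z @ drop (Suc k) w)"
  by (simp add: inj_on_def)

lemma subst_slot_zsum: "subst_slot w k (zsum f S) = zsum (\<lambda>s. subst_slot w k (f s)) S"
  unfolding subst_slot_def by (rule image_zsum[OF inj_slot])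

lemma subst_slot_vadd: "subst_slot w k (vadd A B) = vadd (subst_slot w k A) (subst_slot w k B)"
  unfolding subst_slot_def by (rule image_vadd[OF inj_slot])

lemma finite_subst_slot[simp]: "finite V \<Longrightarrow> finite (subst_slot w k V)"
  by (simp add: subst_slot_def)

lemma pos_sum_nil[simp]: "pos_sum g [] = {}"
  by (simp add: pos_sum_def)

lemma pos_sum_single[simp]: "pos_sum g [a] = g a"
  by (simp add: pos_sum_def subst_slot_def lessThan_def)

lemma finite_pos_sum[simp]: "(\<And>a. finite (g a)) \<Longrightarrow> finite (pos_sum g w)"
  by (simp add: pos_sum_def)

lemma subst_slot_append1: "k < length u \<Longrightarrow> subst_slot (u @ w) k V = (\<lambda>z. z @ w) ` subst_slot u k V"
  by (simp add: subst_slot_def image_image)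

lemma subst_slot_append2: "subst_slot (u @ w) (length u + j) V = (\<lambda>z. u @ z) ` subst_slot w j V"
  by (simp add: subst_slot_def image_image)

lemma pos_sum_append:
  assumes g: "\<And>a. finite (g a)"
  shows "pos_sum g (u @ w) = vadd (omult {u} (pos_sum g w)) (omult (pos_sum g u) {w})"
proof -
  let ?f = "\<lambda>k. subst_slot (u @ w) k (g ((u @ w) ! k))"
  have I: "{..<length (u @ w)} = {..<length u} \<union> (\<lambda>j. length u + j) ` {..<length w}"
  proof (rule set_eqI)
    fix x
    show "x \<in> {..<length (u @ w)} \<longleftrightarrow> x \<in> {..<length u} \<union> (\<lambda>j. length u + j) ` {..<length w}"
    proof (cases "x < length u")
      case True then show ?thesis by simp
    next
      case False
      then have e: "x = length u + (x - length u)" by simp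
      show ?thesis
      proof
        assume "x \<in> {..<length (u @ w)}"
        then have "x - length u \<in> {..<length w}" using False by auto
        then show "x \<in> {..<length u} \<union> (\<lambda>j. length u + j) ` {..<length w}" using e by blast
      qed auto
    qed
  qed
  have D: "{..<length u} \<inter> (\<lambda>j. length u + j) ` {..<length w} = {}" by auto
  have "pos_sum g (u @ w) = vadd (zsum ?f {..<length u}) (zsum ?f ((\<lambda>j. length u + j) ` {..<length w}))"
    unfolding pos_sum_def I by (rule zsum_vadd2) (use D in auto)
  also have "zsum ?f {..<length u} = zsum (\<lambda>k. (\<lambda>z. z @ w) ` subst_slot u k (g (u ! k))) {..<length u}"
    by (rule zsum_cong) (simp add: subst_slot_append1 nth_append)
  also have "\<dots> = (\<lambda>z. z @ w) ` pos_sum g u"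
    unfolding pos_sum_def by (rule image_zsum[symmetric]) (rule inj_append_right)
  also have "\<dots> = omult (pos_sum g u) {w}" by (simp add: omult_single_right)
  also have "zsum ?f ((\<lambda>j. length u + j) ` {..<length w}) = zsum (\<lambda>j. ?f (length u + j)) {..<length w}"
    by (rule zsum_image) (simp add: inj_on_def)
  also have "\<dots> = zsum (\<lambda>j. (\<lambda>z. u @ z) ` subst_slot w j (g (w ! j))) {..<length w}"
    by (rule zsum_cong) (simp add: subst_slot_append2 nth_append)
  also have "\<dots> = (\<lambda>z. u @ z) ` pos_sum g w"
    unfolding pos_sum_def by (rule image_zsum[symmetric]) (rule inj_append_left)
  also have "\<dots> = omult {u} (pos_sum g w)" by (simp add: omult_single_left)
  finally show ?thesis by (simp only: vadd_comm)
qed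

lemma finite_listset[simp]: "(\<And>A. A \<in> set As \<Longrightarrow> finite A) \<Longrightarrow> finite (listset As)"
proof (induction As)
  case Nil then show ?case by simp
next
  case (Cons A As)
  have "set_Cons A (listset As) = (\<lambda>(x, xs). x # xs) ` (A \<times> listset As)"
    by (auto simp: set_Cons_def)
  then show ?case using Cons by simp
qed

lemma listset_append: "listset (As @ Bs) = (\<lambda>(u, v). u @ v) ` (listset As \<times> listset Bs)"
proof (induction As)
  case Nil then show ?case by (auto simp: image_iff)
next
  case (Cons A As)
  show ?case
  proof (rule set_eqI)
    fix z
    show "z \<in> listset ((A # As) @ Bs) \<longleftrightarrow> z \<in> (\<lambda>(u, v). u @ v) ` (listset (A # As) \<times> listset Bs)"
    proof
      assume "z \<in> listset ((A # As) @ Bs)"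
      then obtain x xs where 1: "z = x # xs" "x \<in> A" "xs \<in> listset (As @ Bs)"
        by (auto simp: set_Cons_def)
      obtain uv where "xs = (\<lambda>(u, v). u @ v) uv" "uv \<in> listset As \<times> listset Bs"
        using 1(3) unfolding Cons by (rule imageE)
      then obtain u v where "xs = u @ v" "u \<in> listset As" "v \<in> listset Bs"
        by (cases uv) auto
      then have "z = x # u @ v" "x \<in> A" "u \<in> listset As" "v \<in> listset Bs" using 1 by auto
      then show "z \<in> (\<lambda>(u, v). u @ v) ` (listset (A # As) \<times> listset Bs)"
      proof -
        have "x # u \<in> listset (A # As)" using \<open>x \<in> A\<close> \<open>u \<in> listset As\<close> by (auto simp: set_Cons_def)
        then have "(x # u, v) \<in> listset (A # As) \<times> listset Bs" using \<open>v \<in> listset Bs\<close> by simp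
        then show ?thesis using \<open>z = x # u @ v\<close> by (intro rev_image_eqI) auto
      qed
    next
      assume "z \<in> (\<lambda>(u, v). u @ v) ` (listset (A # As) \<times> listset Bs)"
      then obtain uv where "z = (\<lambda>(u, v). u @ v) uv" "uv \<in> listset (A # As) \<times> listset Bs"
        by (rule imageE)
      then obtain xu v where 1: "z = xu @ v" "xu \<in> listset (A # As)" "v \<in> listset Bs"
        by (cases uv) auto
      then obtain x u where 2: "xu = x # u" "x \<in> A" "u \<in> listset As"
        by (auto simp: set_Cons_def)
      have "u @ v \<in> listset (As @ Bs)" unfolding Cons using 1 2 by (intro rev_image_eqI) auto
      then show "z \<in> listset ((A # As) @ Bs)"
        using 1 2 by (auto simp: set_Cons_def)
    qed
  qed
qed

lemma listset_singletons[simp]: "listset (map (\<lambda>b. {b}) y) = {y}"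
  by (induction y) (auto simp: set_Cons_def)

lemma listset_length: "u \<in> listset As \<Longrightarrow> length u = length As"
  by (induction As arbitrary: u) (auto simp: set_Cons_def)

lemma omult_inj: "inj_on (\<lambda>(u, v). u @ v) (X \<times> Y) \<Longrightarrow> omult X Y = (\<lambda>(u, v). u @ v) ` (X \<times> Y)"
proof -
  assume i: "inj_on (\<lambda>(u, v). u @ v) (X \<times> Y)"
  have "zsum (\<lambda>(u, v). {u @ v}) (X \<times> Y) = zsum (\<lambda>x. {(\<lambda>(u, v). u @ v) x}) (X \<times> Y)"
    by (rule zsum_cong) auto
  then show ?thesis unfolding omult_def using zsum_singletons_image[OF i] by (rule trans)
qed

lemma omult_fixed_len: "(\<And>u. u \<in> X \<Longrightarrow> length u = n) \<Longrightarrow> omult X Y = (\<lambda>(u, v). u @ v) ` (X \<times> Y)"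
  by (rule omult_inj) (auto simp: inj_on_def)

lemma W_listset: "listset [B] = W B"
  by (simp add: W_def)

lemma finite_W[simp]: "finite S \<Longrightarrow> finite (W S)"
  by (simp add: W_def)

lemma W_single[simp]: "W {c} = {[c]}" by (simp add: W_def)

lemma W_zsum: "W (zsum f S) = zsum (\<lambda>s. W (f s)) S"
  unfolding W_def by (rule image_zsum) (simp add: inj_on_def)

lemma W_vadd: "W (vadd A B) = vadd (W A) (W B)"
  unfolding W_def by (rule image_vadd) (simp add: inj_on_def)

lemma W_empty[simp]: "W {} = {}" by (simp add: W_def)

lemma listset_snoc: "listset (As @ [B]) = omult (listset As) (W B)"
  by (simp add: listset_append W_listset[symmetric] omult_fixed_len[OF listset_length])

definition P2 :: "('b \<times> 'b) set \<Rightarrow> 'b list set" where "P2 S = (\<lambda>(x, y). [x, y]) ` S"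

lemma inj_P2: "inj (\<lambda>(x::'b, y::'b). [x, y])" by (auto simp: inj_on_def)

lemma P2_zsum: "P2 (zsum f S) = zsum (\<lambda>s. P2 (f s)) S"
  unfolding P2_def by (rule image_zsum[OF inj_P2])

lemma P2_vadd: "P2 (vadd A B) = vadd (P2 A) (P2 B)"
  unfolding P2_def by (rule image_vadd[OF inj_P2])

lemma P2_times: "P2 (A \<times> B) = omult (W A) (W B)"
  by (subst omult_fixed_len[where n=1]) (auto simp: P2_def W_def image_iff)

lemma finite_P2[simp]: "finite S \<Longrightarrow> finite (P2 S)" by (simp add: P2_def)

lemma finite_case_prod[simp]: "(\<And>p q. finite (f p q)) \<Longrightarrow> finite (case x of (p, q) \<Rightarrow> f p q)"
  by (cases x) simp

locale bialg =
  fixes deg :: "'b \<Rightarrow> nat" and e :: 'b and eps :: "'b \<Rightarrow> bool"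
    and dA :: "'b \<Rightarrow> 'b set" and cop :: "'b \<Rightarrow> ('b \<times> 'b) set" and mu :: "'b \<Rightarrow> 'b \<Rightarrow> 'b set"
  assumes CB: "conn_dg_bialgebra deg e eps dA cop mu"
begin

lemma ax_fin1: "(\<forall>b. finite (dA b) \<and> finite (cop b))"
  using CB unfolding conn_dg_bialgebra_def by (elim conjE exE) assumption
lemma ax_fin2: "(\<forall>a b. finite (mu a b))"
  using CB unfolding conn_dg_bialgebra_def by (elim conjE exE) assumption
lemma ax_degcop: "(\<forall>b x y. (x, y) \<in> cop b \<longrightarrow> deg x + deg y = deg b)"
  using CB unfolding conn_dg_bialgebra_def by (elim conjE exE) assumption
lemma ax_degmu: "(\<forall>a b c. c \<in> mu a b \<longrightarrow> deg c = deg a + deg b)"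
  using CB unfolding conn_dg_bialgebra_def by (elim conjE exE) assumption
lemma ax_deg0: "(\<forall>b. deg b = 0 \<longleftrightarrow> b = e)"
  using CB unfolding conn_dg_bialgebra_def by (elim conjE exE) assumption
lemma ax_coassoc: "(\<forall>b. zsum (\<lambda>(x, y). (\<lambda>(x1, x2). (x1, x2, y)) ` cop x) (cop b)
         = zsum (\<lambda>(x, y). (\<lambda>(y1, y2). (x, y1, y2)) ` cop y) (cop b))"
  using CB unfolding conn_dg_bialgebra_def by (elim conjE exE) assumption
lemma ax_counitL: "(\<forall>b. zsum (\<lambda>(x, y). if eps x then {y} else {}) (cop b) = {b})"
  using CB unfolding conn_dg_bialgebra_def by (elim conjE exE) assumption
lemma ax_counitR: "(\<forall>b. zsum (\<lambda>(x, y). if eps y then {x} else {}) (cop b) = {b})"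
  using CB unfolding conn_dg_bialgebra_def by (elim conjE exE) assumption
lemma ax_dcop: "(\<forall>b. zsum cop (dA b)
         = zsum (\<lambda>(x, y). vadd ((\<lambda>x'. (x', y)) ` dA x) ((\<lambda>y'. (x, y')) ` dA y)) (cop b))"
  using CB unfolding conn_dg_bialgebra_def by (elim conjE exE) assumption
lemma ax_epsd: "(\<forall>b. \<not> eps_vec eps (dA b))"
  using CB unfolding conn_dg_bialgebra_def by (elim conjE exE) assumption
lemma ax_unit: "(\<forall>b. mu e b = {b} \<and> mu b e = {b})"
  using CB unfolding conn_dg_bialgebra_def by (elim conjE exE) assumption
lemma ax_leib: "(\<forall>a b. zsum dA (mu a b) = vadd (zsum (\<lambda>c. mu c b) (dA a)) (zsum (mu a) (dA b)))"
  using CB unfolding conn_dg_bialgebra_def by (elim conjE exE) assumption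
lemma ax_copmu: "(\<forall>a b. zsum cop (mu a b)
         = zsum (\<lambda>((a1, a2), (b1, b2)). mu a1 b1 \<times> mu a2 b2) (cop a \<times> cop b))"
  using CB unfolding conn_dg_bialgebra_def by (elim conjE exE) assumption

lemma fin_dA[simp]: "finite (dA b)" using ax_fin1 by blast
lemma fin_cop[simp]: "finite (cop b)" using ax_fin1 by blast
lemma fin_mu[simp]: "finite (mu a b)" using ax_fin2 by blast
lemma deg_cop: "(x, y) \<in> cop b \<Longrightarrow> deg x + deg y = deg b" using ax_degcop by blast
lemma deg_mu: "c \<in> mu a b \<Longrightarrow> deg c = deg a + deg b" using ax_degmu by blast
lemma deg0: "deg b = 0 \<longleftrightarrow> b = e" using ax_deg0 by (rule spec)
lemma counitL: "zsum (\<lambda>(x, y). if eps x then {y} else {}) (cop b) = {b}" using ax_counitL by (rule spec)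
lemma counitR: "zsum (\<lambda>(x, y). if eps y then {x} else {}) (cop b) = {b}" using ax_counitR by (rule spec)
lemma coassoc: "zsum (\<lambda>(x, y). (\<lambda>(x1, x2). (x1, x2, y)) ` cop x) (cop b)
         = zsum (\<lambda>(x, y). (\<lambda>(y1, y2). (x, y1, y2)) ` cop y) (cop b)" using ax_coassoc by (rule spec)
lemma dcop: "zsum cop (dA b)
         = zsum (\<lambda>(x, y). vadd ((\<lambda>x'. (x', y)) ` dA x) ((\<lambda>y'. (x, y')) ` dA y)) (cop b)"
  using ax_dcop by (rule spec)
lemma eps_d: "\<not> eps_vec eps (dA b)" using ax_epsd by (rule spec)
lemma mu_unit: "mu e b = {b}" "mu b e = {b}" using ax_unit by blast+
lemma mu_e_fun: "mu e = (\<lambda>b. {b})" by (rule ext) (simp add: mu_unit)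
lemma leib: "zsum dA (mu a b) = vadd (zsum (\<lambda>c. mu c b) (dA a)) (zsum (mu a) (dA b))"
  using ax_leib by blast
lemma cop_mu: "zsum cop (mu a b)
         = zsum (\<lambda>((a1, a2), (b1, b2)). mu a1 b1 \<times> mu a2 b2) (cop a \<times> cop b)"
  using ax_copmu by blast

lemma e_notin_mu: "b \<noteq> e \<Longrightarrow> e \<notin> mu a b"
proof
  assume "b \<noteq> e" "e \<in> mu a b"
  then have "deg e = deg a + deg b" using deg_mu by blast
  moreover have "deg e = 0" using deg0 by simp
  moreover have "deg b \<noteq> 0" using deg0 \<open>b \<noteq> e\<close> by simp
  ultimately show False by simp
qed

lemma cop_e: "cop e = {(e, e)}" and eps_e: "eps e"
proof -
  have sub: "cop e \<subseteq> {(e, e)}"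
  proof
    fix z assume "z \<in> cop e"
    then obtain x y where z: "z = (x, y)" "(x, y) \<in> cop e" by (cases z) auto
    have "deg x + deg y = deg e" by (rule deg_cop[OF z(2)])
    then have "deg x + deg y = 0" using deg0 by simp
    then show "z \<in> {(e, e)}" using z deg0 by auto
  qed
  have ne: "cop e \<noteq> {}" using counitL[of e] by auto
  show ce: "cop e = {(e, e)}" using sub ne by blast
  show "eps e" using counitL[of e] unfolding ce by (simp split: if_splits)
qed

lemma dA_e: "dA e = {}"
proof -
  have "zsum dA (mu e e) = vadd (zsum (\<lambda>c. mu c e) (dA e)) (zsum (mu e) (dA e))" by (rule leib)
  then show ?thesis by (simp add: mu_unit mu_e_fun)
qed

end

context bialg
begin

lemma itdiag_Suc: "itdiag eps cop (Suc n) a = zsum (\<lambda>(x, y). (\<lambda>l. l @ [y]) ` itdiag eps cop n x) (cop a)"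
proof (cases n)
  case 0
  have "zsum (\<lambda>(x, y). (\<lambda>l. l @ [y]) ` itdiag eps cop 0 x) (cop a)
      = zsum (\<lambda>p. (\<lambda>y. [y]) ` (case p of (x, y) \<Rightarrow> if eps x then {y} else {})) (cop a)"
    by (rule zsum_cong) (auto split: prod.split)
  also have "\<dots> = (\<lambda>y. [y]) ` zsum (\<lambda>(x, y). if eps x then {y} else {}) (cop a)"
    by (rule image_zsum[symmetric]) (simp add: inj_on_def)
  also have "\<dots> = {[a]}" by (simp add: counitL)
  finally show ?thesis using 0 by simp
next
  case (Suc m) then show ?thesis by simp
qed

lemma finite_itdiag[simp]: "finite (itdiag eps cop n a)"
proof (induction n arbitrary: a)
  case 0 then show ?case by simp
next
  case (Suc n)
  have "finite (zsum (\<lambda>(x, y). (\<lambda>l. l @ [y]) ` itdiag eps cop n x) (cop a))"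
    by (rule finite_zsum) (auto split: prod.split simp: Suc.IH)
  then show ?case by (simp only: itdiag_Suc)
qed

lemma length_itdiag: "cs \<in> itdiag eps cop n a \<Longrightarrow> length cs = n"
proof (induction n arbitrary: a cs)
  case 0 then show ?case by (simp split: if_splits)
next
  case (Suc n)
  then have "cs \<in> zsum (\<lambda>(x, y). (\<lambda>l. l @ [y]) ` itdiag eps cop n x) (cop a)"
    by (simp only: itdiag_Suc)
  then have "cs \<in> \<Union> ((\<lambda>(x, y). (\<lambda>l. l @ [y]) ` itdiag eps cop n x) ` cop a)"
    using zsum_subset by (rule subsetD[rotated])
  then obtain xy where "xy \<in> cop a" "cs \<in> (\<lambda>(x, y). (\<lambda>l. l @ [y]) ` itdiag eps cop n x) xy" by (rule UN_E)
  then obtain x y l where "cs = l @ [y]" "l \<in> itdiag eps cop n x" by (cases xy) auto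
  then show ?case using Suc.IH by simp
qed

lemma itdiag_e: "itdiag eps cop n e = {replicate n e}"
proof (induction n)
  case 0 then show ?case by (simp add: eps_e)
next
  case (Suc n) then show ?case by (simp add: itdiag_Suc cop_e replicate_append_same)
qed

definition F :: "'b \<Rightarrow> 'b list \<Rightarrow> 'b list set" where
  "F x y = zsum (\<lambda>cs. listset (map2 mu cs y)) (itdiag eps cop (length y) x)"

lemma finite_map2_mu: "A \<in> set (map2 mu cs y) \<Longrightarrow> finite A"
  by (auto simp: set_zip)

lemma finite_listset_map2[simp]: "finite (listset (map2 mu cs y))"
  by (intro finite_listset finite_map2_mu)

lemma finite_F[simp]: "finite (F x y)"
  unfolding F_def by (intro finite_zsum finite_itdiag finite_listset finite_map2_mu)

lemma F_nil: "F x [] = (if eps x then {[]} else {})"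
  by (simp add: F_def)

lemma map2_mu_e: "map2 mu (replicate (length y) e) y = map (\<lambda>b. {b}) y"
  by (induction y) (simp_all add: mu_unit)

lemma F_e: "F e y = {y}"
  by (simp add: F_def itdiag_e map2_mu_e)

lemma F_snoc: "F x (y @ [b]) = zsum (\<lambda>(p, q). omult (F p y) (W (mu q b))) (cop x)"
proof -
  let ?n = "length y"
  let ?G = "\<lambda>cs. listset (map2 mu cs (y @ [b]))"
  let ?H = "\<lambda>(p, q). (\<lambda>l. l @ [q]) ` itdiag eps cop ?n p"
  have "F x (y @ [b]) = zsum ?G (zsum ?H (cop x))"
    by (simp add: F_def itdiag_Suc)
  also have "\<dots> = zsum (\<lambda>pq. zsum ?G (?H pq)) (cop x)"
    by (rule zsum_zsum) simp_all
  also have "\<dots> = zsum (\<lambda>(p, q). omult (F p y) (W (mu q b))) (cop x)"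
  proof (rule zsum_cong)
    fix pq assume "pq \<in> cop x"
    obtain p q where pq: "pq = (p, q)" by (cases pq)
    have "zsum ?G (?H pq) = zsum (\<lambda>l. ?G (l @ [q])) (itdiag eps cop ?n p)"
      unfolding pq by (simp add: zsum_image inj_on_def)
    also have "\<dots> = zsum (\<lambda>l. omult (listset (map2 mu l y)) (W (mu q b))) (itdiag eps cop ?n p)"
    proof (rule zsum_cong)
      fix l assume "l \<in> itdiag eps cop ?n p"
      then have "length l = length y" by (rule length_itdiag)
      then show "?G (l @ [q]) = omult (listset (map2 mu l y)) (W (mu q b))"
        by (simp add: listset_snoc)
    qed
    also have "\<dots> = omult (F p y) (W (mu q b))"
      unfolding F_def by (rule omult_zsum_left[symmetric]) (simp_all add: finite_map2_mu)
    finally show "zsum ?G (?H pq) = (\<lambda>(p, q). omult (F p y) (W (mu q b))) pq" using pq by simp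
  qed
  finally show ?thesis .
qed

lemma cup1_word_pos: "cup1_word eps cop mu u z = pos_sum (\<lambda>a. F a z) u"
  unfolding cup1_word_def pos_sum_def F_def by (rule zsum_cong) (simp add: subst_slot_zsum)

lemma finite_red_cop[simp]: "finite (red_cop cop e a)"
  by (simp add: red_cop_def)

lemma dOmega_word_pos: "dOmega_word e dA cop w = pos_sum (\<lambda>a. vadd (W (dA a)) (P2 (red_cop cop e a))) w"
  unfolding dOmega_word_def pos_sum_def by (rule zsum_cong) (simp add: subst_slot_vadd W_def P2_def)

lemma finite_dw[simp]: "finite (dOmega_word e dA cop w)"
  by (simp add: dOmega_word_pos)

lemma finite_cup1_word[simp]: "finite (cup1_word eps cop mu u z)"
  by (simp add: cup1_word_pos)

lemma dO_zsum: "finite S \<Longrightarrow> (\<And>s. s \<in> S \<Longrightarrow> finite (f s)) \<Longrightarrow>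
    dOmega e dA cop (zsum f S) = zsum (\<lambda>s. dOmega e dA cop (f s)) S"
  unfolding dOmega_def by (rule zsum_zsum)

lemma dO_vadd: "finite A \<Longrightarrow> finite B \<Longrightarrow>
    dOmega e dA cop (vadd A B) = vadd (dOmega e dA cop A) (dOmega e dA cop B)"
  unfolding dOmega_def by (rule zsum_vadd_set)

lemma dO_single[simp]: "dOmega e dA cop {w} = dOmega_word e dA cop w"
  by (simp add: dOmega_def)

lemma dO_empty[simp]: "dOmega e dA cop {} = {}"
  by (simp add: dOmega_def)

lemma finite_dO[simp]: "finite X \<Longrightarrow> finite (dOmega e dA cop X)"
  by (simp add: dOmega_def)

lemma dw_append: "dOmega_word e dA cop (u @ w)
   = vadd (omult {u} (dOmega_word e dA cop w)) (omult (dOmega_word e dA cop u) {w})"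
  unfolding dOmega_word_pos by (rule pos_sum_append) simp

lemma omult_sum_singl_left: "finite X \<Longrightarrow> finite Z \<Longrightarrow> zsum (\<lambda>u. omult {u} Z) X = omult X Z"
  using omult_zsum_left[of X "\<lambda>u. {u}" Z] by simp

lemma omult_sum_singl_right: "finite Y \<Longrightarrow> finite Z \<Longrightarrow> zsum (\<lambda>w. omult Z {w}) Y = omult Z Y"
  using omult_zsum_right[of Y "\<lambda>u. {u}" Z] by simp

lemma dO_omult:
  assumes X: "finite X" and Y: "finite Y"
  shows "dOmega e dA cop (omult X Y)
     = vadd (omult X (dOmega e dA cop Y)) (omult (dOmega e dA cop X) Y)"
proof -
  let ?d = "dOmega e dA cop" and ?dw = "dOmega_word e dA cop"
  have "?d (omult X Y) = ?d (zsum (\<lambda>u. zsum (\<lambda>w. {u @ w}) Y) X)"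
    using X Y by (simp add: omult_alt)
  also have "\<dots> = zsum (\<lambda>u. zsum (\<lambda>w. ?dw (u @ w)) Y) X"
    using X Y by (simp add: dO_zsum)
  also have "\<dots> = zsum (\<lambda>u. zsum (\<lambda>w. vadd (omult {u} (?dw w)) (omult (?dw u) {w})) Y) X"
    by (simp add: dw_append)
  also have "\<dots> = zsum (\<lambda>u. vadd (zsum (\<lambda>w. omult {u} (?dw w)) Y) (zsum (\<lambda>w. omult (?dw u) {w}) Y)) X"
    using Y by (simp add: zsum_vadd_fun)
  also have "\<dots> = zsum (\<lambda>u. vadd (omult {u} (?d Y)) (omult (?dw u) Y)) X"
  proof (rule zsum_cong)
    fix u
    have "zsum (\<lambda>w. omult {u} (?dw w)) Y = omult {u} (?d Y)"
      unfolding dOmega_def using Y by (simp add: omult_zsum_right)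
    moreover have "zsum (\<lambda>w. omult (?dw u) {w}) Y = omult (?dw u) Y"
      using Y by (simp add: omult_sum_singl_right)
    ultimately show "vadd (zsum (\<lambda>w. omult {u} (?dw w)) Y) (zsum (\<lambda>w. omult (?dw u) {w}) Y)
        = vadd (omult {u} (?d Y)) (omult (?dw u) Y)" by simp
  qed
  also have "\<dots> = vadd (zsum (\<lambda>u. omult {u} (?d Y)) X) (zsum (\<lambda>u. omult (?dw u) Y) X)"
    using X by (simp add: zsum_vadd_fun)
  also have "\<dots> = vadd (omult X (?d Y)) (omult (?d X) Y)"
    using X Y by (simp add: omult_sum_singl_left dOmega_def omult_zsum_left)
  finally show ?thesis .
qed

lemma dw_single: "dOmega_word e dA cop [c] = vadd (W (dA c)) (P2 (red_cop cop e c))"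
  by (simp add: dOmega_word_pos)

lemma P2_red_cop: "c \<noteq> e \<Longrightarrow> P2 (red_cop cop e c) = vadd (P2 (cop c)) (vadd {[c, e]} {[e, c]})"
  by (simp add: red_cop_def P2_vadd) (auto simp: P2_def vadd_def)

lemma dO_W:
  assumes V: "finite V" and nV: "e \<notin> V"
  shows "dOmega e dA cop (W V) = vadd (vadd (W (zsum dA V)) (P2 (zsum cop V)))
                                 (vadd (omult (W V) {[e]}) (omult {[e]} (W V)))"
proof -
  have "W V = zsum (\<lambda>c. {[c]}) V" unfolding W_def by (rule zsum_singletons_image[symmetric]) (simp add: inj_on_def)
  then have "dOmega e dA cop (W V) = zsum (\<lambda>c. dOmega_word e dA cop [c]) V"
    using V by (simp add: dO_zsum)
  also have "\<dots> = zsum (\<lambda>c. vadd (W (dA c)) (vadd (P2 (cop c)) (vadd {[c, e]} {[e, c]}))) V"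
  proof (rule zsum_cong)
    fix c assume "c \<in> V"
    then have "c \<noteq> e" using nV by auto
    then show "dOmega_word e dA cop [c] = vadd (W (dA c)) (vadd (P2 (cop c)) (vadd {[c, e]} {[e, c]}))"
      by (simp add: dw_single P2_red_cop)
  qed
  also have "\<dots> = vadd (zsum (\<lambda>c. W (dA c)) V) (vadd (zsum (\<lambda>c. P2 (cop c)) V)
                    (vadd (zsum (\<lambda>c. {[c, e]}) V) (zsum (\<lambda>c. {[e, c]}) V)))"
    using V by (simp add: zsum_vadd_fun)
  also have "zsum (\<lambda>c. W (dA c)) V = W (zsum dA V)" by (simp add: W_zsum)
  also have "zsum (\<lambda>c. P2 (cop c)) V = P2 (zsum cop V)" by (simp add: P2_zsum)
  also have "zsum (\<lambda>c. {[c, e]}) V = omult (W V) {[e]}"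
    by (simp add: zsum_singletons_image inj_on_def omult_single_right W_def image_image)
  also have "zsum (\<lambda>c. {[e, c]}) V = omult {[e]} (W V)"
    by (simp add: zsum_singletons_image inj_on_def omult_single_left W_def image_image)
  finally show ?thesis by (simp only: vadd_assoc)
qed

end

lemma zsum_cong_pair: "(\<And>p q. (p, q) \<in> S \<Longrightarrow> f p q = g p q) \<Longrightarrow>
   zsum (\<lambda>(p, q). f p q) S = zsum (\<lambda>(p, q). g p q) S"
  by (rule zsum_cong) (auto split: prod.split)

lemma zsum_vadd_pair: "finite S \<Longrightarrow> zsum (\<lambda>(p, q). vadd (f p q) (g p q)) S
    = vadd (zsum (\<lambda>(p, q). f p q) S) (zsum (\<lambda>(p, q). g p q) S)"
proof -
  assume S: "finite S"
  have "zsum (\<lambda>(p, q). vadd (f p q) (g p q)) S = zsum (\<lambda>s. vadd ((\<lambda>(p, q). f p q) s) ((\<lambda>(p, q). g p q) s)) S"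
    by (rule zsum_cong) (auto split: prod.split)
  also have "\<dots> = vadd (zsum (\<lambda>(p, q). f p q) S) (zsum (\<lambda>(p, q). g p q) S)"
    using S by (rule zsum_vadd_fun)
  finally show ?thesis .
qed

lemma omult_zsum_pair_left: "finite S \<Longrightarrow> (\<And>p q. finite (f p q)) \<Longrightarrow> finite Y \<Longrightarrow>
   omult (zsum (\<lambda>(p, q). f p q) S) Y = zsum (\<lambda>(p, q). omult (f p q) Y) S"
  by (subst omult_zsum_left) (simp_all, rule zsum_cong, simp split: prod.split)

lemma omult_zsum_pair_right: "finite S \<Longrightarrow> (\<And>p q. finite (f p q)) \<Longrightarrow> finite X \<Longrightarrow>
   omult X (zsum (\<lambda>(p, q). f p q) S) = zsum (\<lambda>(p, q). omult X (f p q)) S"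
  by (subst omult_zsum_right) (simp_all add: prod.case_distrib)

lemma zsum_zero_pair[simp]: "zsum (\<lambda>(p, q). {}) S = {}"
  by (simp add: zsum_def case_prod_unfold)

context bialg
begin

lemma dO_zsum_pair: "finite S \<Longrightarrow> (\<And>p q. finite (f p q)) \<Longrightarrow>
   dOmega e dA cop (zsum (\<lambda>(p, q). f p q) S) = zsum (\<lambda>(p, q). dOmega e dA cop (f p q)) S"
  by (subst dO_zsum) (simp_all add: prod.case_distrib)

lemma coassoc_gen:
  "zsum (\<lambda>(u, w). zsum (\<lambda>(p, q). G p q w) (cop u)) (cop x)
 = zsum (\<lambda>(p, u). zsum (\<lambda>(q, w). G p q w) (cop u)) (cop x)"
proof -
  let ?g = "\<lambda>(p, q, w). G p q w"
  have "zsum ?g (zsum (\<lambda>(u, w). (\<lambda>(x1, x2). (x1, x2, w)) ` cop u) (cop x))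
      = zsum ?g (zsum (\<lambda>(u, w). (\<lambda>(y1, y2). (u, y1, y2)) ` cop w) (cop x))"
    by (simp only: coassoc)
  moreover have "zsum ?g (zsum (\<lambda>(u, w). (\<lambda>(x1, x2). (x1, x2, w)) ` cop u) (cop x))
      = zsum (\<lambda>(u, w). zsum (\<lambda>(p, q). G p q w) (cop u)) (cop x)"
  proof -
    have "zsum ?g (zsum (\<lambda>(u, w). (\<lambda>(x1, x2). (x1, x2, w)) ` cop u) (cop x))
       = zsum (\<lambda>uw. zsum ?g ((\<lambda>(u, w). (\<lambda>(x1, x2). (x1, x2, w)) ` cop u) uw)) (cop x)"
      by (rule zsum_zsum) auto
    also have "\<dots> = zsum (\<lambda>(u, w). zsum (\<lambda>(p, q). G p q w) (cop u)) (cop x)"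
    proof (rule zsum_cong)
      fix uw assume "uw \<in> cop x"
      obtain u w where uw: "uw = (u, w)" by (cases uw)
      have "zsum ?g ((\<lambda>(x1, x2). (x1, x2, w)) ` cop u) = zsum (\<lambda>(p, q). G p q w) (cop u)"
        by (subst zsum_image, simp add: inj_on_def split: prod.split, rule zsum_cong, auto split: prod.split)
      then show "zsum ?g ((\<lambda>(u, w). (\<lambda>(x1, x2). (x1, x2, w)) ` cop u) uw)
          = (\<lambda>(u, w). zsum (\<lambda>(p, q). G p q w) (cop u)) uw" unfolding uw by simp
    qed
    finally show ?thesis .
  qed
  moreover have "zsum ?g (zsum (\<lambda>(u, w). (\<lambda>(y1, y2). (u, y1, y2)) ` cop w) (cop x))
      = zsum (\<lambda>(p, u). zsum (\<lambda>(q, w). G p q w) (cop u)) (cop x)"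
  proof -
    have "zsum ?g (zsum (\<lambda>(u, w). (\<lambda>(y1, y2). (u, y1, y2)) ` cop w) (cop x))
       = zsum (\<lambda>uw. zsum ?g ((\<lambda>(u, w). (\<lambda>(y1, y2). (u, y1, y2)) ` cop w) uw)) (cop x)"
      by (rule zsum_zsum) auto
    also have "\<dots> = zsum (\<lambda>(p, u). zsum (\<lambda>(q, w). G p q w) (cop u)) (cop x)"
    proof (rule zsum_cong)
      fix uw assume "uw \<in> cop x"
      obtain p u where uw: "uw = (p, u)" by (cases uw)
      have "zsum ?g ((\<lambda>(y1, y2). (p, y1, y2)) ` cop u) = zsum (\<lambda>(q, w). G p q w) (cop u)"
        by (subst zsum_image, simp add: inj_on_def split: prod.split, rule zsum_cong, auto split: prod.split)
      then show "zsum ?g ((\<lambda>(u, w). (\<lambda>(y1, y2). (u, y1, y2)) ` cop w) uw)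
          = (\<lambda>(p, u). zsum (\<lambda>(q, w). G p q w) (cop u)) uw" unfolding uw by simp
    qed
    finally show ?thesis .
  qed
  ultimately show ?thesis by simp
qed

lemma piece_dA: "zsum (\<lambda>x'. F x' (y @ [b])) (dA x)
  = vadd (zsum (\<lambda>(p, q). omult (zsum (\<lambda>x'. F x' y) (dA p)) (W (mu q b))) (cop x))
         (zsum (\<lambda>(p, q). omult (F p y) (zsum (\<lambda>c. W (mu c b)) (dA q))) (cop x))"
proof -
  let ?g = "\<lambda>(p, q). omult (F p y) (W (mu q b))"
  have "zsum (\<lambda>x'. F x' (y @ [b])) (dA x) = zsum (\<lambda>x'. zsum ?g (cop x')) (dA x)"
    by (simp add: F_snoc)
  also have "\<dots> = zsum ?g (zsum cop (dA x))"
    by (rule zsum_zsum[symmetric]) simp_all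
  also have "\<dots> = zsum ?g (zsum (\<lambda>(u, w). vadd ((\<lambda>x'. (x', w)) ` dA u) ((\<lambda>y'. (u, y')) ` dA w)) (cop x))"
    by (simp only: dcop)
  also have "\<dots> = zsum (\<lambda>uw. zsum ?g ((\<lambda>(u, w). vadd ((\<lambda>x'. (x', w)) ` dA u) ((\<lambda>y'. (u, y')) ` dA w)) uw)) (cop x)"
    by (rule zsum_zsum) auto
  also have "\<dots> = zsum (\<lambda>(u, w). vadd (omult (zsum (\<lambda>x'. F x' y) (dA u)) (W (mu w b)))
                                         (omult (F u y) (zsum (\<lambda>c. W (mu c b)) (dA w)))) (cop x)"
  proof (rule zsum_cong)
    fix uw assume "uw \<in> cop x"
    obtain u w where uw: "uw = (u, w)" by (cases uw)
    have 1: "zsum ?g ((\<lambda>x'. (x', w)) ` dA u) = omult (zsum (\<lambda>x'. F x' y) (dA u)) (W (mu w b))"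
      by (simp add: zsum_image inj_on_def omult_zsum_left)
    have 2: "zsum ?g ((\<lambda>y'. (u, y')) ` dA w) = omult (F u y) (zsum (\<lambda>c. W (mu c b)) (dA w))"
      by (simp add: zsum_image inj_on_def omult_zsum_right)
    show "zsum ?g ((\<lambda>(u, w). vadd ((\<lambda>x'. (x', w)) ` dA u) ((\<lambda>y'. (u, y')) ` dA w)) uw)
      = (\<lambda>(u, w). vadd (omult (zsum (\<lambda>x'. F x' y) (dA u)) (W (mu w b)))
                                         (omult (F u y) (zsum (\<lambda>c. W (mu c b)) (dA w)))) uw"
      unfolding uw by (simp add: zsum_vadd_set 1 2)
  qed
  also have "\<dots> = vadd (zsum (\<lambda>(p, q). omult (zsum (\<lambda>x'. F x' y) (dA p)) (W (mu q b))) (cop x))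
         (zsum (\<lambda>(p, q). omult (F p y) (zsum (\<lambda>c. W (mu c b)) (dA q))) (cop x))"
    by (simp add: zsum_vadd_pair)
  finally show ?thesis .
qed

lemma piece_p: "zsum (\<lambda>(p, q). omult {[p]} (F q (y @ [b]))) (cop x)
  = zsum (\<lambda>(p, q). omult (zsum (\<lambda>(p1, p2). omult {[p1]} (F p2 y)) (cop p)) (W (mu q b))) (cop x)"
proof -
  have "zsum (\<lambda>(p, q). omult {[p]} (F q (y @ [b]))) (cop x)
     = zsum (\<lambda>(p, u). zsum (\<lambda>(q, w). omult {[p]} (omult (F q y) (W (mu w b)))) (cop u)) (cop x)"
    by (rule zsum_cong_pair) (simp add: F_snoc omult_zsum_pair_right)
  also have "\<dots> = zsum (\<lambda>(u, w). zsum (\<lambda>(p, q). omult {[p]} (omult (F q y) (W (mu w b)))) (cop u)) (cop x)"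
    by (rule coassoc_gen[symmetric])
  also have "\<dots> = zsum (\<lambda>(p, q). omult (zsum (\<lambda>(p1, p2). omult {[p1]} (F p2 y)) (cop p)) (W (mu q b))) (cop x)"
    by (rule zsum_cong_pair) (simp add: omult_zsum_pair_left omult_assoc)
  finally show ?thesis .
qed

lemma piece_Er: "omult (F x (y @ [b])) {[e]} = zsum (\<lambda>(p, q). omult (F p y) (omult (W (mu q b)) {[e]})) (cop x)"
  by (simp add: F_snoc omult_zsum_pair_left omult_assoc)

lemma piece_El: "omult {[e]} (F x (y @ [b])) = zsum (\<lambda>(p, q). omult (omult {[e]} (F p y)) (W (mu q b))) (cop x)"
  by (simp add: F_snoc omult_zsum_pair_right omult_assoc)

lemma piece_dy: "zsum (F x) (omult (dOmega_word e dA cop y) {[b]})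
   = zsum (\<lambda>(p, q). omult (zsum (F p) (dOmega_word e dA cop y)) (W (mu q b))) (cop x)"
proof -
  let ?D = "dOmega_word e dA cop y"
  have "zsum (F x) (omult ?D {[b]}) = zsum (\<lambda>u. F x (u @ [b])) ?D"
    by (simp add: omult_single_right zsum_image inj_on_def)
  also have "\<dots> = zsum (\<lambda>u. zsum (\<lambda>pq. (\<lambda>(p, q). omult (F p u) (W (mu q b))) pq) (cop x)) ?D"
    by (simp add: F_snoc)
  also have "\<dots> = zsum (\<lambda>pq. zsum (\<lambda>u. (\<lambda>(p, q). omult (F p u) (W (mu q b))) pq) ?D) (cop x)"
    by (rule zsum_swap) simp_all
  also have "\<dots> = zsum (\<lambda>(p, q). omult (zsum (F p) ?D) (W (mu q b))) (cop x)"
  proof (rule zsum_cong)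
    fix pq assume "pq \<in> cop x"
    obtain p q where pq: "pq = (p, q)" by (cases pq)
    show "zsum (\<lambda>u. (\<lambda>(p, q). omult (F p u) (W (mu q b))) pq) ?D = (\<lambda>(p, q). omult (zsum (F p) ?D) (W (mu q b))) pq"
      unfolding pq by (simp add: omult_zsum_left)
  qed
  finally show ?thesis .
qed

lemma piece_db: "zsum (F x) (omult {y} (W (dA b)))
   = zsum (\<lambda>(p, q). omult (F p y) (zsum (\<lambda>c. W (mu q c)) (dA b))) (cop x)"
proof -
  have "omult {y} (W (dA b)) = (\<lambda>c. y @ [c]) ` dA b"
    by (simp add: omult_single_left W_def image_image)
  then have "zsum (F x) (omult {y} (W (dA b))) = zsum (\<lambda>c. F x (y @ [c])) (dA b)"
    by (simp add: zsum_image inj_on_def)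
  also have "\<dots> = zsum (\<lambda>c. zsum (\<lambda>pq. (\<lambda>(p, q). omult (F p y) (W (mu q c))) pq) (cop x)) (dA b)"
    by (simp add: F_snoc)
  also have "\<dots> = zsum (\<lambda>pq. zsum (\<lambda>c. (\<lambda>(p, q). omult (F p y) (W (mu q c))) pq) (dA b)) (cop x)"
    by (rule zsum_swap) simp_all
  also have "\<dots> = zsum (\<lambda>(p, q). omult (F p y) (zsum (\<lambda>c. W (mu q c)) (dA b))) (cop x)"
  proof (rule zsum_cong)
    fix pq assume "pq \<in> cop x"
    obtain p q where pq: "pq = (p, q)" by (cases pq)
    show "zsum (\<lambda>c. (\<lambda>(p, q). omult (F p y) (W (mu q c))) pq) (dA b) = (\<lambda>(p, q). omult (F p y) (zsum (\<lambda>c. W (mu q c)) (dA b))) pq"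
      unfolding pq by (simp add: omult_zsum_right)
  qed
  finally show ?thesis .
qed

lemma piece_be: "zsum (F x) (omult {y} {[b, e]}) = zsum (\<lambda>(p, q). omult (F p (y @ [b])) {[q]}) (cop x)"
proof -
  have "zsum (F x) (omult {y} {[b, e]}) = F x ((y @ [b]) @ [e])" by simp
  also have "\<dots> = zsum (\<lambda>(p, q). omult (F p (y @ [b])) (W (mu q e))) (cop x)" by (rule F_snoc)
  also have "\<dots> = zsum (\<lambda>(p, q). omult (F p (y @ [b])) {[q]}) (cop x)" by (simp only: mu_unit W_single)
  finally show ?thesis .
qed

lemma piece_eb: "zsum (F x) (omult {y} {[e, b]})
  = zsum (\<lambda>(p, q). omult (zsum (\<lambda>(p1, p2). omult (F p1 y) {[p2]}) (cop p)) (W (mu q b))) (cop x)"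
proof -
  have "zsum (F x) (omult {y} {[e, b]}) = F x ((y @ [e]) @ [b])" by simp
  also have "\<dots> = zsum (\<lambda>(p, q). omult (F p (y @ [e])) (W (mu q b))) (cop x)" by (rule F_snoc)
  also have "\<dots> = zsum (\<lambda>(p, q). omult (zsum (\<lambda>(p1, p2). omult (F p1 y) (W (mu p2 e))) (cop p)) (W (mu q b))) (cop x)"
    by (rule zsum_cong_pair) (simp only: F_snoc)
  also have "\<dots> = zsum (\<lambda>(p, q). omult (zsum (\<lambda>(p1, p2). omult (F p1 y) {[p2]}) (cop p)) (W (mu q b))) (cop x)"
    by (simp only: mu_unit W_single)
  finally show ?thesis .
qed

lemma dw_snoc: "b \<noteq> e \<Longrightarrow> dOmega_word e dA cop (y @ [b])
  = vadd (omult {y} (vadd (vadd (W (dA b)) (P2 (cop b))) (vadd {[b, e]} {[e, b]})))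
         (omult (dOmega_word e dA cop y) {[b]})"
proof -
  assume b: "b \<noteq> e"
  have "dOmega_word e dA cop [b] = dOmega e dA cop (W {b})" by simp
  also have "\<dots> = vadd (vadd (W (dA b)) (P2 (cop b))) (vadd {[b, e]} {[e, b]})"
    using b by (subst dO_W) auto
  finally show ?thesis by (simp add: dw_append)
qed

lemma piece_cb: "zsum (F x) (omult {y} (P2 (cop b)))
  = zsum (\<lambda>(p, q). omult (F p y) (zsum (\<lambda>((a1, a2), (b1, b2)). omult (W (mu a1 b1)) (W (mu a2 b2))) (cop q \<times> cop b))) (cop x)"
proof -
  let ?G = "\<lambda>b1 b2 p q w. omult (omult (F p y) (W (mu q b1))) (W (mu w b2))"
  have om: "omult {y} (P2 (cop b)) = (\<lambda>(b1, b2). y @ [b1, b2]) ` cop b"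
    by (simp add: omult_single_left P2_def image_image case_prod_unfold)
  have "zsum (F x) (omult {y} (P2 (cop b))) = zsum (\<lambda>bb. F x ((\<lambda>(b1, b2). y @ [b1, b2]) bb)) (cop b)"
    unfolding om by (rule zsum_image) (auto simp: inj_on_def)
  also have "\<dots> = zsum (\<lambda>bb. zsum (\<lambda>pu. (\<lambda>(b1, b2). (\<lambda>(p, u). zsum (\<lambda>(q, w). ?G b1 b2 p q w) (cop u))) bb pu) (cop x)) (cop b)"
  proof (rule zsum_cong)
    fix bb assume "bb \<in> cop b"
    obtain b1 b2 where bb: "bb = (b1, b2)" by (cases bb)
    have "F x (y @ [b1, b2]) = F x ((y @ [b1]) @ [b2])" by simp
    also have "\<dots> = zsum (\<lambda>(u, w). omult (F u (y @ [b1])) (W (mu w b2))) (cop x)" by (rule F_snoc)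
    also have "\<dots> = zsum (\<lambda>(u, w). zsum (\<lambda>(p, q). ?G b1 b2 p q w) (cop u)) (cop x)"
      by (rule zsum_cong_pair) (simp add: F_snoc omult_zsum_pair_left)
    also have "\<dots> = zsum (\<lambda>(p, u). zsum (\<lambda>(q, w). ?G b1 b2 p q w) (cop u)) (cop x)"
      by (rule coassoc_gen)
    finally show "F x ((\<lambda>(b1, b2). y @ [b1, b2]) bb)
      = zsum (\<lambda>pu. (\<lambda>(b1, b2). (\<lambda>(p, u). zsum (\<lambda>(q, w). ?G b1 b2 p q w) (cop u))) bb pu) (cop x)"
      unfolding bb by simp
  qed
  also have "\<dots> = zsum (\<lambda>pu. zsum (\<lambda>bb. (\<lambda>(b1, b2). (\<lambda>(p, u). zsum (\<lambda>(q, w). ?G b1 b2 p q w) (cop u))) bb pu) (cop b)) (cop x)"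
    by (rule zsum_swap) simp_all
  also have "\<dots> = zsum (\<lambda>(p, q). omult (F p y) (zsum (\<lambda>((a1, a2), (b1, b2)). omult (W (mu a1 b1)) (W (mu a2 b2))) (cop q \<times> cop b))) (cop x)"
  proof (rule zsum_cong)
    fix pu assume "pu \<in> cop x"
    obtain p u where pu: "pu = (p, u)" by (cases pu)
    have "omult (F p y) (zsum (\<lambda>((a1, a2), (b1, b2)). omult (W (mu a1 b1)) (W (mu a2 b2))) (cop u \<times> cop b))
        = zsum (\<lambda>z. omult (F p y) ((\<lambda>((a1, a2), (b1, b2)). omult (W (mu a1 b1)) (W (mu a2 b2))) z)) (cop u \<times> cop b)"
      by (rule omult_zsum_right) (auto split: prod.split)
    also have "\<dots> = zsum (\<lambda>qw. zsum (\<lambda>bb. omult (F p y) ((\<lambda>((a1, a2), (b1, b2)). omult (W (mu a1 b1)) (W (mu a2 b2))) (qw, bb))) (cop b)) (cop u)"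
      by (rule zsum_prod) simp_all
    also have "\<dots> = zsum (\<lambda>bb. zsum (\<lambda>qw. omult (F p y) ((\<lambda>((a1, a2), (b1, b2)). omult (W (mu a1 b1)) (W (mu a2 b2))) (qw, bb))) (cop u)) (cop b)"
      by (rule zsum_swap) simp_all
    also have "\<dots> = zsum (\<lambda>bb. (\<lambda>(b1, b2). (\<lambda>(p, u). zsum (\<lambda>(q, w). ?G b1 b2 p q w) (cop u))) bb pu) (cop b)"
    proof (rule zsum_cong)
      fix bb assume "bb \<in> cop b"
      obtain b1 b2 where bb: "bb = (b1, b2)" by (cases bb)
      show "zsum (\<lambda>qw. omult (F p y) ((\<lambda>((a1, a2), (b1, b2)). omult (W (mu a1 b1)) (W (mu a2 b2))) (qw, bb))) (cop u)
          = (\<lambda>(b1, b2). (\<lambda>(p, u). zsum (\<lambda>(q, w). ?G b1 b2 p q w) (cop u))) bb pu"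
        unfolding bb pu by (simp only: prod.case) (rule zsum_cong, auto simp: omult_assoc split: prod.split)
    qed
    finally show "zsum (\<lambda>bb. (\<lambda>(b1, b2). (\<lambda>(p, u). zsum (\<lambda>(q, w). ?G b1 b2 p q w) (cop u))) bb pu) (cop b)
        = (\<lambda>(p, q). omult (F p y) (zsum (\<lambda>((a1, a2), (b1, b2)). omult (W (mu a1 b1)) (W (mu a2 b2))) (cop q \<times> cop b))) pu"
      unfolding pu by simp
  qed
  finally show ?thesis .
qed

end

context bialg
begin

definition RG :: "'b \<Rightarrow> 'b list \<Rightarrow> 'b list set" where
  "RG x y = vadd (vadd (zsum (\<lambda>x'. F x' y) (dA x))
                       (zsum (\<lambda>(p, q). vadd (omult (F p y) {[q]}) (omult {[p]} (F q y))) (cop x)))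
                 (vadd (vadd (omult (F x y) {[e]}) (omult {[e]} (F x y)))
                       (zsum (F x) (dOmega_word e dA cop y)))"

lemma key_nil: "dOmega e dA cop (F x []) = RG x []"
proof -
  have lhs: "dOmega e dA cop (F x []) = {}"
    by (simp add: F_nil dOmega_word_pos)
  have r1: "zsum (\<lambda>x'. F x' []) (dA x) = {}"
  proof (rule set_eqI)
    fix c
    show "c \<in> zsum (\<lambda>x'. F x' []) (dA x) \<longleftrightarrow> c \<in> {}"
    proof (cases "c = []")
      case True
      have "{x' \<in> dA x. c \<in> F x' []} = {x' \<in> dA x. eps x'}" using True by (auto simp: F_nil)
      then show ?thesis using eps_d[of x] by (simp add: zsum_def eps_vec_def)
    next
      case False
      have e: "{x' \<in> dA x. c \<in> F x' []} = {}" using False by (auto simp: F_nil)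
      show ?thesis unfolding zsum_def mem_Collect_eq e by simp
    qed
  qed
  have a: "zsum (\<lambda>(p, q). omult (F p []) {[q]}) (cop x) = W {x}"
  proof -
    have "zsum (\<lambda>(p, q). omult (F p []) {[q]}) (cop x) = zsum (\<lambda>pq. W ((\<lambda>(p, q). if eps p then {q} else {}) pq)) (cop x)"
      by (rule zsum_cong) (auto simp: F_nil W_def split: prod.split)
    also have "\<dots> = W {x}" by (simp only: W_zsum[symmetric] counitL)
    finally show ?thesis .
  qed
  have b: "zsum (\<lambda>(p, q). omult {[p]} (F q [])) (cop x) = W {x}"
  proof -
    have "zsum (\<lambda>(p, q). omult {[p]} (F q [])) (cop x) = zsum (\<lambda>pq. W ((\<lambda>(p, q). if eps q then {p} else {}) pq)) (cop x)"
      by (rule zsum_cong) (auto simp: F_nil W_def split: prod.split)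
    also have "\<dots> = W {x}" by (simp only: W_zsum[symmetric] counitR)
    finally show ?thesis .
  qed
  have c: "omult (F x []) {[e]} = omult {[e]} (F x [])" by (simp add: F_nil)
  show ?thesis unfolding lhs RG_def
    by (simp add: r1 zsum_vadd_pair a b c dOmega_word_pos)
qed

lemma dW_mu: "b \<noteq> e \<Longrightarrow> dOmega e dA cop (W (mu q b)) =
  vadd (vadd (vadd (zsum (\<lambda>c. W (mu c b)) (dA q)) (zsum (\<lambda>c. W (mu q c)) (dA b)))
             (zsum (\<lambda>((a1, a2), (b1, b2)). omult (W (mu a1 b1)) (W (mu a2 b2))) (cop q \<times> cop b)))
       (vadd (omult (W (mu q b)) {[e]}) (omult {[e]} (W (mu q b))))"
proof -
  assume b: "b \<noteq> e"
  have 1: "W (zsum dA (mu q b)) = vadd (zsum (\<lambda>c. W (mu c b)) (dA q)) (zsum (\<lambda>c. W (mu q c)) (dA b))"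
    by (simp add: leib W_vadd W_zsum)
  have 2: "P2 (zsum cop (mu q b)) = zsum (\<lambda>((a1, a2), (b1, b2)). omult (W (mu a1 b1)) (W (mu a2 b2))) (cop q \<times> cop b)"
    by (simp only: cop_mu P2_zsum) (rule zsum_cong, auto simp: P2_times split: prod.split)
  show ?thesis using b by (simp add: dO_W e_notin_mu 1 2)
qed

lemma RG_split: "RG p y = vadd (vadd (zsum (\<lambda>x'. F x' y) (dA p))
       (vadd (zsum (\<lambda>(p1, p2). omult (F p1 y) {[p2]}) (cop p)) (zsum (\<lambda>(p1, p2). omult {[p1]} (F p2 y)) (cop p))))
       (vadd (vadd (omult (F p y) {[e]}) (omult {[e]} (F p y))) (zsum (F p) (dOmega_word e dA cop y)))"
  unfolding RG_def by (simp add: zsum_vadd_pair)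

lemma key_snoc:
  assumes IH: "\<And>x. dOmega e dA cop (F x y) = RG x y" and b: "b \<noteq> e"
  shows "dOmega e dA cop (F x (y @ [b])) = RG x (y @ [b])"
proof -
  define L1 where "L1 = zsum (\<lambda>(p, q). omult (F p y) (zsum (\<lambda>c. W (mu c b)) (dA q))) (cop x)"
  define L2 where "L2 = zsum (\<lambda>(p, q). omult (F p y) (zsum (\<lambda>c. W (mu q c)) (dA b))) (cop x)"
  define L3 where "L3 = zsum (\<lambda>(p, q). omult (F p y) (zsum (\<lambda>((a1, a2), (b1, b2)). omult (W (mu a1 b1)) (W (mu a2 b2))) (cop q \<times> cop b))) (cop x)"
  define L4 where "L4 = zsum (\<lambda>(p, q). omult (F p y) (omult (W (mu q b)) {[e]})) (cop x)"
  define L5 where "L5 = zsum (\<lambda>(p, q). omult (F p y) (omult {[e]} (W (mu q b)))) (cop x)"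
  define L6 where "L6 = zsum (\<lambda>(p, q). omult (zsum (\<lambda>x'. F x' y) (dA p)) (W (mu q b))) (cop x)"
  define L7 where "L7 = zsum (\<lambda>(p, q). omult (zsum (\<lambda>(p1, p2). omult (F p1 y) {[p2]}) (cop p)) (W (mu q b))) (cop x)"
  define L8 where "L8 = zsum (\<lambda>(p, q). omult (zsum (\<lambda>(p1, p2). omult {[p1]} (F p2 y)) (cop p)) (W (mu q b))) (cop x)"
  define L9 where "L9 = zsum (\<lambda>(p, q). omult (omult (F p y) {[e]}) (W (mu q b))) (cop x)"
  define L10 where "L10 = zsum (\<lambda>(p, q). omult (omult {[e]} (F p y)) (W (mu q b))) (cop x)"
  define L11 where "L11 = zsum (\<lambda>(p, q). omult (zsum (F p) (dOmega_word e dA cop y)) (W (mu q b))) (cop x)"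
  define R2 where "R2 = zsum (\<lambda>(p, q). omult (F p (y @ [b])) {[q]}) (cop x)"
  have lhs0: "dOmega e dA cop (F x (y @ [b]))
     = zsum (\<lambda>(p, q). vadd (omult (F p y) (dOmega e dA cop (W (mu q b)))) (omult (RG p y) (W (mu q b)))) (cop x)"
    by (simp add: F_snoc dO_zsum_pair dO_omult IH)
  have lhs: "dOmega e dA cop (F x (y @ [b]))
     = vadd (vadd (vadd (vadd L1 L2) L3) (vadd L4 L5)) (vadd (vadd L6 (vadd L7 L8)) (vadd (vadd L9 L10) L11))"
  proof -
    have fin3: "\<And>q. finite (zsum (\<lambda>((a1, a2), (b1, b2)). omult (W (mu a1 b1)) (W (mu a2 b2))) (cop q \<times> cop b))"
      by (rule finite_zsum) (auto split: prod.split)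
    show ?thesis unfolding lhs0 L1_def L2_def L3_def L4_def L5_def L6_def L7_def L8_def L9_def L10_def L11_def
    using b by (simp add: dW_mu RG_split omult_vadd_left omult_vadd_right zsum_vadd_pair fin3)
  qed
  have r1: "zsum (\<lambda>x'. F x' (y @ [b])) (dA x) = vadd L6 L1"
    unfolding L6_def L1_def by (rule piece_dA)
  have r23: "zsum (\<lambda>(p, q). vadd (omult (F p (y @ [b])) {[q]}) (omult {[p]} (F q (y @ [b])))) (cop x) = vadd R2 L8"
    unfolding R2_def L8_def by (simp add: zsum_vadd_pair piece_p)
  have r4: "omult (F x (y @ [b])) {[e]} = L4" unfolding L4_def by (rule piece_Er)
  have r5: "omult {[e]} (F x (y @ [b])) = L10" unfolding L10_def by (rule piece_El)
  have r6: "zsum (F x) (dOmega_word e dA cop (y @ [b])) = vadd (vadd (vadd L2 L3) (vadd R2 L7)) L11"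
  proof -
    have "zsum (F x) (dOmega_word e dA cop (y @ [b]))
      = vadd (vadd (vadd (zsum (F x) (omult {y} (W (dA b)))) (zsum (F x) (omult {y} (P2 (cop b)))))
                   (vadd (zsum (F x) (omult {y} {[b, e]})) (zsum (F x) (omult {y} {[e, b]}))))
             (zsum (F x) (omult (dOmega_word e dA cop y) {[b]}))"
      using b by (simp add: dw_snoc omult_vadd_right zsum_vadd_set del: omult_singles)
    then show ?thesis unfolding L2_def L3_def R2_def L7_def L11_def
      by (simp only: piece_db piece_cb piece_be piece_eb piece_dy)
  qed
  have l59: "L9 = L5" unfolding L9_def L5_def by (rule zsum_cong_pair) (simp add: omult_assoc)
  show ?thesis unfolding lhs RG_def[of x "y @ [b]"] r1 r23 r4 r5 r6 l59
    by (simp only: vadd_assoc vadd_comm vadd_left_comm vadd_self vadd_self2 vadd_empty)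
qed

lemma key: "(\<forall>c\<in>set y. c \<noteq> e) \<Longrightarrow> dOmega e dA cop (F x y) = RG x y"
proof (induction y arbitrary: x rule: rev_induct)
  case Nil show ?case by (rule key_nil)
next
  case (snoc b y)
  show ?case by (rule key_snoc) (use snoc in auto)
qed

end

context bialg
begin

abbreviation cw where "cw \<equiv> cup1_word eps cop mu"
abbreviation dw where "dw \<equiv> dOmega_word e dA cop"
abbreviation dO where "dO \<equiv> dOmega e dA cop"
abbreviation cp where "cp \<equiv> cup1 eps cop mu"

lemma cw_append: "cw (u1 @ u2) w = vadd (omult {u1} (cw u2 w)) (omult (cw u1 w) {u2})"
  unfolding cup1_word_pos by (rule pos_sum_append) simp

lemma cw_nil[simp]: "cw [] w = {}" by (simp add: cup1_word_pos)
lemma cw_nil_fun: "cw [] = (\<lambda>w. {})" by (rule ext) simp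

lemma cw_single: "cw [a] w = F a w" by (simp add: cup1_word_pos)

lemma cp_single_right: "cp Z {w} = zsum (\<lambda>z. cw z w) Z"
proof -
  have "Z \<times> {w} = (\<lambda>z. (z, w)) ` Z" by auto
  then show ?thesis by (simp add: cup1_def zsum_image inj_on_def)
qed

lemma cp_single_left: "cp {u} Z = zsum (cw u) Z"
proof -
  have "{u} \<times> Z = (\<lambda>z. (u, z)) ` Z" by auto
  then show ?thesis by (simp add: cup1_def zsum_image inj_on_def)
qed

lemma finite_cp[simp]: "finite X \<Longrightarrow> finite Y \<Longrightarrow> finite (cp X Y)"
  unfolding cup1_def by (rule finite_zsum) (auto split: prod.split)

lemma hirsch_left: "finite Z \<Longrightarrow> zsum (\<lambda>z. cw (u1 @ z) w) Z
   = vadd (omult {u1} (cp Z {w})) (omult (cw u1 w) Z)"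
  by (simp add: cw_append zsum_vadd_fun cp_single_right omult_zsum_right omult_sum_singl_right)

lemma hirsch_right: "finite Z \<Longrightarrow> zsum (\<lambda>z. cw (z @ u2) w) Z
   = vadd (omult Z (cw u2 w)) (omult (cp Z {w}) {u2})"
  by (simp add: cw_append zsum_vadd_fun cp_single_right omult_zsum_left omult_sum_singl_left)

definition Dw :: "'b list \<Rightarrow> 'b list \<Rightarrow> bool" where
  "Dw u w \<longleftrightarrow> dO (cw u w) = vadd (vadd (cp (dw u) {w}) (cp {u} (dw w))) (vadd {u @ w} {w @ u})"

lemma Dw_nil: "Dw [] w"
  by (simp add: Dw_def cp_single_right cp_single_left dOmega_word_pos cw_nil_fun)

lemma Dw_single: "a \<noteq> e \<Longrightarrow> \<forall>c\<in>set w. c \<noteq> e \<Longrightarrow> Dw [a] w"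
proof -
  assume a: "a \<noteq> e" and w: "\<forall>c\<in>set w. c \<noteq> e"
  have lhs: "dO (cw [a] w) = RG a w" using key[OF w] by (simp add: cw_single)
  have dwa: "dw [a] = vadd (W (dA a)) (vadd (P2 (cop a)) (vadd {[a, e]} {[e, a]}))"
    using a by (simp add: dw_single P2_red_cop)
  have t1: "zsum (\<lambda>z. cw z w) (W (dA a)) = zsum (\<lambda>x'. F x' w) (dA a)"
    by (simp add: W_def zsum_image inj_on_def cw_single)
  have t2: "zsum (\<lambda>z. cw z w) (P2 (cop a)) = zsum (\<lambda>(p, q). vadd (omult (F p w) {[q]}) (omult {[p]} (F q w))) (cop a)"
  proof -
    have "zsum (\<lambda>z. cw z w) (P2 (cop a)) = zsum (\<lambda>pq. cw ((\<lambda>(p, q). [p, q]) pq) w) (cop a)"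
      unfolding P2_def by (rule zsum_image) (auto simp: inj_on_def)
    also have "\<dots> = zsum (\<lambda>(p, q). vadd (omult (F p w) {[q]}) (omult {[p]} (F q w))) (cop a)"
    proof (rule zsum_cong)
      fix pq assume "pq \<in> cop a"
      obtain p q where pq: "pq = (p, q)" by (cases pq)
      have "cw [p, q] w = cw ([p] @ [q]) w" by simp
      also have "\<dots> = vadd (omult {[p]} (F q w)) (omult (F p w) {[q]})"
        by (simp only: cw_append cw_single)
      finally show "cw ((\<lambda>(p, q). [p, q]) pq) w = (\<lambda>(p, q). vadd (omult (F p w) {[q]}) (omult {[p]} (F q w))) pq"
        unfolding pq by (simp add: vadd_comm)
    qed
    finally show ?thesis .
  qed
  have t3: "cw [a, e] w = vadd {[a] @ w} (omult (F a w) {[e]})"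
  proof -
    have "cw [a, e] w = cw ([a] @ [e]) w" by simp
    also have "\<dots> = vadd (omult {[a]} (F e w)) (omult (F a w) {[e]})" by (simp only: cw_append cw_single)
    finally show ?thesis by (simp add: F_e)
  qed
  have t4: "cw [e, a] w = vadd (omult {[e]} (F a w)) {w @ [a]}"
  proof -
    have "cw [e, a] w = cw ([e] @ [a]) w" by simp
    also have "\<dots> = vadd (omult {[e]} (F a w)) (omult (F e w) {[a]})" by (simp only: cw_append cw_single)
    finally show ?thesis by (simp add: F_e)
  qed
  have t5: "cp {[a]} (dw w) = zsum (F a) (dw w)"
    by (simp add: cp_single_left cw_single[abs_def])
  have rhs1: "cp (dw [a]) {w} = vadd (zsum (\<lambda>x'. F x' w) (dA a)) (vadd
      (zsum (\<lambda>(p, q). vadd (omult (F p w) {[q]}) (omult {[p]} (F q w))) (cop a))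
      (vadd (vadd {[a] @ w} (omult (F a w) {[e]})) (vadd (omult {[e]} (F a w)) {w @ [a]})))"
    unfolding cp_single_right dwa using a
    by (simp add: zsum_vadd_set t1 t2 t3 t4 del: append_Cons append_Nil)
  show ?thesis unfolding Dw_def lhs rhs1 t5 RG_def
    by (simp only: vadd_assoc vadd_comm vadd_left_comm vadd_self vadd_self2 vadd_empty)
qed

lemma Dw_append:
  assumes D1: "Dw u1 w" and D2: "Dw u2 w"
  shows "Dw (u1 @ u2) w"
proof -
  define C1 where "C1 = cw u1 w"
  define C2 where "C2 = cw u2 w"
  have fC1: "finite C1" and fC2: "finite C2" unfolding C1_def C2_def by simp_all
  have I1: "dO C1 = vadd (vadd (cp (dw u1) {w}) (cp {u1} (dw w))) (vadd {u1 @ w} {w @ u1})"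
    using D1 unfolding Dw_def C1_def .
  have I2: "dO C2 = vadd (vadd (cp (dw u2) {w}) (cp {u2} (dw w))) (vadd {u2 @ w} {w @ u2})"
    using D2 unfolding Dw_def C2_def .
  have lhs: "dO (cw (u1 @ u2) w) = vadd (vadd (omult {u1} (dO C2)) (omult (dw u1) C2))
                                         (vadd (omult C1 (dw u2)) (omult (dO C1) {u2}))"
    unfolding cw_append C1_def[symmetric] C2_def[symmetric] using fC1 fC2
    by (simp add: dO_vadd dO_omult)
  have lhs2: "dO (cw (u1 @ u2) w) = vadd (vadd (vadd (vadd (omult {u1} (cp (dw u2) {w})) (omult {u1} (cp {u2} (dw w))))
          (vadd {u1 @ u2 @ w} {u1 @ w @ u2})) (omult (dw u1) C2))
          (vadd (omult C1 (dw u2)) (vadd (vadd (omult (cp (dw u1) {w}) {u2}) (omult (cp {u1} (dw w)) {u2}))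
            (vadd {u1 @ w @ u2} {w @ u1 @ u2})))"
    unfolding lhs I1 I2 by (simp add: omult_vadd_left omult_vadd_right)
  have r1: "cp (dw (u1 @ u2)) {w} = vadd (vadd (omult {u1} (cp (dw u2) {w})) (omult C1 (dw u2)))
                                      (vadd (omult (dw u1) C2) (omult (cp (dw u1) {w}) {u2}))"
  proof -
    have "cp (dw (u1 @ u2)) {w} = vadd (zsum (\<lambda>z. cw z w) (omult {u1} (dw u2))) (zsum (\<lambda>z. cw z w) (omult (dw u1) {u2}))"
      by (simp add: dw_append cp_single_right zsum_vadd_set)
    also have "zsum (\<lambda>z. cw z w) (omult {u1} (dw u2)) = zsum (\<lambda>z. cw (u1 @ z) w) (dw u2)"
      by (simp add: omult_single_left zsum_image inj_on_def)
    also have "\<dots> = vadd (omult {u1} (cp (dw u2) {w})) (omult C1 (dw u2))"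
      unfolding C1_def by (simp add: hirsch_left)
    also have "zsum (\<lambda>z. cw z w) (omult (dw u1) {u2}) = zsum (\<lambda>z. cw (z @ u2) w) (dw u1)"
      by (simp add: omult_single_right zsum_image inj_on_def)
    also have "\<dots> = vadd (omult (dw u1) C2) (omult (cp (dw u1) {w}) {u2})"
      unfolding C2_def by (simp add: hirsch_right)
    finally show ?thesis .
  qed
  have r2: "cp {u1 @ u2} (dw w) = vadd (omult {u1} (cp {u2} (dw w))) (omult (cp {u1} (dw w)) {u2})"
  proof -
    have "zsum (cw (u1 @ u2)) (dw w) = zsum (\<lambda>s. vadd (omult {u1} (cw u2 s)) (omult (cw u1 s) {u2})) (dw w)"
      by (rule zsum_cong) (rule cw_append)
    then show ?thesis by (simp add: cp_single_left zsum_vadd_fun omult_zsum_right omult_zsum_left)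
  qed
  show ?thesis unfolding Dw_def lhs2 r1 r2
    by (simp only: append_assoc vadd_assoc vadd_comm vadd_left_comm vadd_self vadd_self2 vadd_empty)
qed

lemma Dw_all: "\<forall>c\<in>set u. c \<noteq> e \<Longrightarrow> \<forall>c\<in>set w. c \<noteq> e \<Longrightarrow> Dw u w"
proof (induction u rule: rev_induct)
  case Nil show ?case by (rule Dw_nil)
next
  case (snoc a u)
  have "Dw u w" using snoc by simp
  moreover have "Dw [a] w" using snoc by (intro Dw_single) auto
  ultimately show ?case by (rule Dw_append)
qed

lemma cp_alt: "finite X \<Longrightarrow> finite Y \<Longrightarrow> cp X Y = zsum (\<lambda>u. zsum (\<lambda>w. cw u w) Y) X"
  by (simp add: cup1_def zsum_prod)

lemma final:
  assumes X: "cobar_elem e X" and Y: "cobar_elem e Y"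
  shows "dO (cp X Y) = vadd (vadd (cp (dO X) Y) (cp X (dO Y))) (vadd (omult X Y) (omult Y X))"
proof -
  have fX: "finite X" and fY: "finite Y" using X Y by (simp_all add: cobar_elem_def)
  have nX: "\<And>u. u \<in> X \<Longrightarrow> \<forall>c\<in>set u. c \<noteq> e" using X by (auto simp: cobar_elem_def)
  have nY: "\<And>w. w \<in> Y \<Longrightarrow> \<forall>c\<in>set w. c \<noteq> e" using Y by (auto simp: cobar_elem_def)
  have "dO (cp X Y) = zsum (\<lambda>u. zsum (\<lambda>w. dO (cw u w)) Y) X"
    using fX fY by (simp add: cp_alt dO_zsum)
  also have "\<dots> = zsum (\<lambda>u. zsum (\<lambda>w. vadd (vadd (cp (dw u) {w}) (cp {u} (dw w))) (vadd {u @ w} {w @ u})) Y) X"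
  proof (rule zsum_cong)
    fix u assume u: "u \<in> X"
    show "zsum (\<lambda>w. dO (cw u w)) Y = zsum (\<lambda>w. vadd (vadd (cp (dw u) {w}) (cp {u} (dw w))) (vadd {u @ w} {w @ u})) Y"
    proof (rule zsum_cong)
      fix w assume w: "w \<in> Y"
      show "dO (cw u w) = vadd (vadd (cp (dw u) {w}) (cp {u} (dw w))) (vadd {u @ w} {w @ u})"
        using Dw_all[OF nX[OF u] nY[OF w]] unfolding Dw_def .
    qed
  qed
  also have "\<dots> = vadd (vadd (zsum (\<lambda>u. zsum (\<lambda>w. cp (dw u) {w}) Y) X) (zsum (\<lambda>u. zsum (\<lambda>w. cp {u} (dw w)) Y) X))
                       (vadd (zsum (\<lambda>u. zsum (\<lambda>w. {u @ w}) Y) X) (zsum (\<lambda>u. zsum (\<lambda>w. {w @ u}) Y) X))"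
    using fX fY by (simp add: zsum_vadd_fun)
  also have "zsum (\<lambda>u. zsum (\<lambda>w. cp (dw u) {w}) Y) X = cp (dO X) Y"
  proof -
    have "cp (dO X) Y = zsum (\<lambda>u'. zsum (\<lambda>w. cw u' w) Y) (zsum dw X)"
      using fX fY by (simp add: cp_alt dOmega_def)
    also have "\<dots> = zsum (\<lambda>u. zsum (\<lambda>u'. zsum (\<lambda>w. cw u' w) Y) (dw u)) X"
      using fX by (simp add: zsum_zsum)
    also have "\<dots> = zsum (\<lambda>u. zsum (\<lambda>w. zsum (\<lambda>u'. cw u' w) (dw u)) Y) X"
      using fY by (intro zsum_cong zsum_swap) simp_all
    also have "\<dots> = zsum (\<lambda>u. zsum (\<lambda>w. cp (dw u) {w}) Y) X"
      by (simp add: cp_single_right)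
    finally show ?thesis by simp
  qed
  also have "zsum (\<lambda>u. zsum (\<lambda>w. cp {u} (dw w)) Y) X = cp X (dO Y)"
  proof -
    have "cp X (dO Y) = zsum (\<lambda>u. zsum (\<lambda>w'. cw u w') (zsum dw Y)) X"
      using fX fY by (simp add: cp_alt dOmega_def)
    also have "\<dots> = zsum (\<lambda>u. zsum (\<lambda>w. zsum (\<lambda>w'. cw u w') (dw w)) Y) X"
      using fY by (intro zsum_cong zsum_zsum) simp_all
    also have "\<dots> = zsum (\<lambda>u. zsum (\<lambda>w. cp {u} (dw w)) Y) X"
      by (simp add: cp_single_left)
    finally show ?thesis by simp
  qed
  also have "zsum (\<lambda>u. zsum (\<lambda>w. {u @ w}) Y) X = omult X Y"
    using fX fY by (simp add: omult_alt)
  also have "zsum (\<lambda>u. zsum (\<lambda>w. {w @ u}) Y) X = omult Y X"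
    using fX fY by (simp only: omult_alt[OF fY fX]) (rule zsum_swap)
  finally show ?thesis .
qed

end

theorem mainTheorem2:
  fixes deg :: "'b \<Rightarrow> nat" and e :: 'b and eps :: "'b \<Rightarrow> bool"
    and dA :: "'b \<Rightarrow> 'b set" and cop :: "'b \<Rightarrow> ('b \<times> 'b) set" and mu :: "'b \<Rightarrow> 'b \<Rightarrow> 'b set"
    and X Y :: "'b list set"
  assumes "conn_dg_bialgebra deg e eps dA cop mu"
    and "cobar_elem e X" and "cobar_elem e Y"
  shows "dOmega e dA cop (cup1 eps cop mu X Y)
       = vadd (vadd (cup1 eps cop mu (dOmega e dA cop X) Y) (cup1 eps cop mu X (dOmega e dA cop Y)))
              (vadd (omult X Y) (omult Y X))"
proof -
  interpret bialg deg e eps dA cop mu by (rule bialg.intro) (rule assms(1))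
  show ?thesis using final[OF assms(2,3)] .
qed

end
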